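(* Let $q$ be odd and let $\mathcal U$ be a conic-BM unital with respect to $\ell_\infty$ in $\mathrm{PG}(2,q^2)$. Then for every point $Q\notin\mathcal U\cup\ell_\infty$, $\mathrm{pedal}(Q)$ is an arc.
   Context: Points of $\mathrm{PG}(2,q^2)$ have homogeneous coordinates $(x,y,z)$; $\ell_\infty$ is the line $z=0$. For $\alpha,\beta\in\mathbb{F}_{q^2}$ with $(\beta^q-\beta)^2+4\alpha^{q+1}$ a nonsquare in $\mathbb{F}_q$, the set $\mathcal U_{\alpha\beta}=\{(x,\alpha x^2+\beta x^{q+1}+r,1): x\in\mathbb{F}_{q^2}, r\in\mathbb{F}_q\}\cup\{(0,1,0)\}$ is an orthogonal Buekenhout–Metz unital with respect to $\ell_\infty$ (a set of $q^3+1$ points meeting every line in $1$ or $q+1$ points). A conic-BM unital with respect to $\ell_\infty$ is such a unital which contains a non-degenerate conic, equivalently one which is the union of $q$ non-degenerate conics pairwise meeting in the point $(0,1,0)$; up to a collineation fixing $\ell_\infty$ these are exactly the sets $\mathcal U_{\alpha\beta}$ with $\beta\in\mathbb{F}_q$. For a point $Q$ not on the unital, $\mathrm{pedal}(Q)$ is the set of points of contact of the $q+1$ tangent lines (lines meeting the unital in exactly one point) through $Q$. An arc is a set meeting every line in at most $2$ points. *)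

theory Defs
  imports Main
begin

type_synonym 'a ppoint = "('a \<times> 'a \<times> 'a) set"

definition pt :: "'a::field \<Rightarrow> 'a \<Rightarrow> 'a \<Rightarrow> 'a ppoint" where
  "pt x y z = {(c * x, c * y, c * z) | c. c \<noteq> 0}"

definition points :: "'a::field ppoint set" where
  "points = {pt x y z | x y z. (x, y, z) \<noteq> (0, 0, 0)}"

definition pline :: "'a::field \<Rightarrow> 'a \<Rightarrow> 'a \<Rightarrow> 'a ppoint set" where
  "pline a b c = {P \<in> points. \<forall>(x, y, z) \<in> P. a * x + b * y + c * z = 0}"

definition lines :: "'a::field ppoint set set" where
  "lines = {pline a b c | a b c. (a, b, c) \<noteq> (0, 0, 0)}"

definition line_inf :: "'a::field ppoint set" where
  "line_inf = pline 0 0 1"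

definition collineation :: "('a::field ppoint \<Rightarrow> 'a ppoint) \<Rightarrow> bool" where
  "collineation \<sigma> \<longleftrightarrow> bij_betw \<sigma> points points \<and> (\<forall>l \<in> lines. \<sigma> ` l \<in> lines)"

definition subF :: "nat \<Rightarrow> 'a::field set" where
  "subF q = {r. r ^ q = r}"

definition nonsquare_in_subF :: "nat \<Rightarrow> 'a::field \<Rightarrow> bool" where
  "nonsquare_in_subF q d \<longleftrightarrow> d \<in> subF q \<and> \<not> (\<exists>s \<in> subF q. s ^ 2 = d)"

definition U_ab :: "nat \<Rightarrow> 'a::field \<Rightarrow> 'a \<Rightarrow> 'a ppoint set" where
  "U_ab q \<alpha> \<beta> =
     {pt x (\<alpha> * x ^ 2 + \<beta> * x ^ (q + 1) + r) 1 | x r. r \<in> subF q} \<union> {pt 0 1 0}"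

definition BM_params_ok :: "nat \<Rightarrow> 'a::field \<Rightarrow> 'a \<Rightarrow> bool" where
  "BM_params_ok q \<alpha> \<beta> \<longleftrightarrow> nonsquare_in_subF q ((\<beta> ^ q - \<beta>) ^ 2 + 4 * \<alpha> ^ (q + 1))"

definition orth_BM_unital :: "nat \<Rightarrow> 'a::field ppoint set \<Rightarrow> bool" where
  "orth_BM_unital q U \<longleftrightarrow>
     (\<exists>\<sigma> \<alpha> \<beta>. collineation \<sigma> \<and> \<sigma> ` line_inf = line_inf \<and> BM_params_ok q \<alpha> \<beta>
              \<and> U = \<sigma> ` U_ab q \<alpha> \<beta>)"

text \<open>Non-degenerate conic: zero set of a ternary quadratic form
a x^2 + b y^2 + c z^2 + d xy + e xz + f yz whose symmetric (polar) matrix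
[[2a,d,e],[d,2b,f],[e,f,2c]] is nonsingular (odd characteristic).\<close>
definition nondeg_conic :: "'a::field ppoint set \<Rightarrow> bool" where
  "nondeg_conic C \<longleftrightarrow>
     (\<exists>a b c d e f.
        (2*a) * ((2*b) * (2*c) - f * f) - d * (d * (2*c) - f * e) + e * (d * f - (2*b) * e) \<noteq> 0
        \<and> C = {P \<in> points. \<forall>(x, y, z) \<in> P.
                 a * x^2 + b * y^2 + c * z^2 + d * x * y + e * x * z + f * y * z = 0})"

definition conic_BM_unital :: "nat \<Rightarrow> 'a::field ppoint set \<Rightarrow> bool" where
  "conic_BM_unital q U \<longleftrightarrow> orth_BM_unital q U \<and> (\<exists>C. nondeg_conic C \<and> C \<subseteq> U)"

definition tangent_lines :: "'a::field ppoint set \<Rightarrow> 'a ppoint set set" where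
  "tangent_lines U = {l \<in> lines. card (l \<inter> U) = 1}"

definition pedal :: "'a::field ppoint set \<Rightarrow> 'a ppoint \<Rightarrow> 'a ppoint set" where
  "pedal U Q = {P. \<exists>l \<in> tangent_lines U. Q \<in> l \<and> l \<inter> U = {P}}"

definition is_arc :: "'a::field ppoint set \<Rightarrow> bool" where
  "is_arc S \<longleftrightarrow> (\<forall>l \<in> lines. card (l \<inter> S) \<le> 2)"

end

theory Submission
  imports Defs "HOL-Algebra.Sylow" "HOL-Algebra.Multiplicative_Group" "HOL-Computational_Algebra.Primes"
    "HOL-Computational_Algebra.Polynomial"
begin

definition addgrp :: "'a::field itself \<Rightarrow> 'a monoid" where
  "addgrp t = \<lparr>carrier = UNIV, monoid.mult = (+), one = 0\<rparr>"

lemma addgrp_group: "group (addgrp TYPE('a::field))"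
  apply (rule groupI)
  apply (auto simp: addgrp_def add.assoc)
  by (metis add.left_inverse)

lemma addgrp_pow: "pow (addgrp TYPE('a::field)) x n = of_nat n * x"
  by (induction n) (auto simp: addgrp_def distrib_right)

lemma prime_dvd_card_is_char:
  fixes t :: "'a::{field,finite} itself"
  assumes r: "prime r" and d: "r dvd card (UNIV::'a set)"
  shows "r = CHAR('a)"
proof (rule ccontr)
  assume ne: "r \<noteq> CHAR('a)"
  let ?G = "addgrp TYPE('a)"
  have G: "group ?G" by (rule addgrp_group)
  have pc: "prime CHAR('a)"
    using prime_CHAR_semidom finite_imp_CHAR_pos[OF finite_UNIV] by blast
  obtain a m where am: "card (UNIV::'a set) = r ^ a * m" and a1: "a \<ge> 1"
  proof -
    obtain m where "card (UNIV::'a set) = r * m" using d by blast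
    thus ?thesis using that[of 1 m] by simp
  qed
  have oG: "Coset.order ?G = r ^ a * m" by (simp add: Coset.order_def addgrp_def am)
  obtain H where H: "subgroup H ?G" "card H = r ^ a"
    using sylow_thm[OF r G oG] by (auto simp: addgrp_def)
  have "r ^ 1 \<le> r ^ a" using a1 prime_gt_0_nat[OF r] by (intro power_increasing) auto
  hence "card H \<ge> 2" using H(2) prime_ge_2_nat[OF r] by simp
  have "\<not> H \<subseteq> {0}"
  proof
    assume "H \<subseteq> {0}"
    hence "card H \<le> card {0::'a}" by (intro card_mono) auto
    thus False using \<open>card H \<ge> 2\<close> by simp
  qed
  then obtain h where h: "h \<in> H" "h \<noteq> (0::'a)" by blast
  let ?H = "?G\<lparr>carrier := H\<rparr>"
  have GH: "group ?H" using H(1) G by (simp add: group.subgroup_imp_group)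
  have finH: "finite (carrier ?H)" by simp
  have hH: "h \<in> carrier ?H" using h by simp
  have powH: "pow ?H h n = of_nat n * h" for n
    by (induction n) (auto simp: addgrp_def distrib_right)
  have "pow ?H h CHAR('a) = one ?H" using powH by (simp add: addgrp_def)
  hence "group.ord ?H h dvd CHAR('a)" using group.pow_eq_id[OF GH hH] by simp
  moreover have "group.ord ?H h dvd Coset.order ?H"
    using group.ord_dvd_group_order[OF GH hH] by simp
  hence "group.ord ?H h dvd r ^ a" using H(2) by (simp add: Coset.order_def)
  moreover have "coprime (CHAR('a)) (r ^ a)"
    using pc r ne by (simp add: primes_coprime coprime_power_right_iff)
  ultimately have "group.ord ?H h = 1"
    by (meson coprime_common_divisor_nat)
  hence "h = one ?H" using group.ord_eq_1[OF GH hH] by simp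
  thus False using h by (simp add: addgrp_def)
qed

lemma dvd_card_char_power:
  fixes t :: "'a::{field,finite} itself"
  shows "n dvd card (UNIV::'a set) \<Longrightarrow> \<exists>k. n = CHAR('a) ^ k"
proof (induction n rule: less_induct)
  case (less n)
  have cpos: "card (UNIV::'a set) > 0" by (simp add: finite_UNIV_card_ge_0)
  show ?case
  proof (cases "n = 1")
    case True thus ?thesis by (intro exI[of _ 0]) simp
  next
    case False
    have "n \<noteq> 0" using less.prems cpos by auto
    then obtain r where r: "prime r" "r dvd n" using False prime_factor_nat by blast
    have "r dvd card (UNIV::'a set)" using r(2) less.prems by (rule dvd_trans)
    hence rc: "r = CHAR('a)" using prime_dvd_card_is_char[OF r(1)] by blast
    obtain n' where n': "n = r * n'" using r(2) by blast
    have "n' < n" using n' \<open>n \<noteq> 0\<close> prime_ge_2_nat[OF r(1)] by auto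
    moreover have "n' dvd card (UNIV::'a set)" using less.prems n' by (metis dvd_mult_right)
    ultimately obtain k where "n' = CHAR('a) ^ k" using less.IH by blast
    thus ?thesis using n' rc by (intro exI[of _ "Suc k"]) simp
  qed
qed

lemma frob_add:
  fixes x y :: "'a::{field,finite}"
  assumes "card (UNIV::'a set) = q ^ 2"
  shows "(x + y) ^ q = x ^ q + y ^ q"
proof -
  have pc: "prime CHAR('a)"
    using prime_CHAR_semidom finite_imp_CHAR_pos[OF finite_UNIV] by blast
  have "q dvd card (UNIV::'a set)" using assms by (simp add: power2_eq_square)
  then obtain k where "q = CHAR('a) ^ k" using dvd_card_char_power by blast
  thus ?thesis using freshmans_dream'[OF pc] by blast
qed

lemma power_card_same:
  fixes x :: "'a::{field,finite}"
  shows "x ^ card (UNIV :: 'a set) = x"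
proof (cases "x = 0")
  case False
  have "x * (\<Prod>y\<in>UNIV-{0}. x * y) = x * x ^ (card (UNIV :: 'a set) - 1) * \<Prod>(UNIV-{0})"
    by (simp add: prod.distrib mult_ac)
  also have "x * x ^ (card (UNIV :: 'a set) - 1) = x ^ Suc (card (UNIV :: 'a set) - 1)"
    by (subst power_Suc) auto
  also have "Suc (card (UNIV :: 'a set) - 1) = card (UNIV :: 'a set)"
    using finite_UNIV_card_ge_0[where ?'a = 'a] by simp
  also have "(\<Prod>y\<in>UNIV-{0}. x * y) = (\<Prod>y\<in>UNIV-{0}. y)"
    by (rule prod.reindex_bij_witness[of _ "\<lambda>y. y / x" "\<lambda>y. x * y"]) (use False in auto)
  finally show ?thesis
    by simp
qed (use finite_UNIV_card_ge_0[where ?'a = 'a] in auto)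

lemma pt_mem: "(u,v,w) \<in> pt x y z \<longleftrightarrow> (\<exists>c. c \<noteq> 0 \<and> u = c*x \<and> v = c*y \<and> w = c*z)"
  by (auto simp: pt_def)

lemma pt_self: "(x,y,z) \<in> pt x y z"
  unfolding pt_mem by (intro exI[of _ 1]) simp

lemma pt_scale:
  fixes c :: "'a::field"
  assumes "c \<noteq> 0" shows "pt (c*x) (c*y) (c*z) = pt x y z"
proof -
  have "pt (c*x) (c*y) (c*z) \<subseteq> pt x y z"
    using assms by (auto simp: pt_def)
  moreover have "pt x y z \<subseteq> pt (c*x) (c*y) (c*z)"
  proof
    fix p assume "p \<in> pt x y z"
    then obtain d where "d \<noteq> 0" "p = (d*x, d*y, d*z)" by (auto simp: pt_def)
    thus "p \<in> pt (c*x) (c*y) (c*z)" using assms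
      by (auto simp: pt_def intro!: exI[of _ "d/c"])
  qed
  ultimately show ?thesis using assms by blast
qed

lemma pt_eq_iff:
  assumes "(x,y,z) \<noteq> (0,0,0)"
  shows "pt x y z = pt x' y' z' \<longleftrightarrow> (\<exists>c. c \<noteq> 0 \<and> x' = c*x \<and> y' = c*y \<and> z' = c*z)"
proof
  assume "pt x y z = pt x' y' z'"
  hence "(x',y',z') \<in> pt x y z" using pt_self by metis
  thus "\<exists>c. c \<noteq> 0 \<and> x' = c*x \<and> y' = c*y \<and> z' = c*z" by (simp add: pt_mem)
next
  assume "\<exists>c. c \<noteq> 0 \<and> x' = c*x \<and> y' = c*y \<and> z' = c*z"
  then obtain c where "c \<noteq> 0" "x' = c*x" "y' = c*y" "z' = c*z" by blast
  thus "pt x y z = pt x' y' z'" using pt_scale by metis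
qed

lemma in_points: "(x,y,z) \<noteq> (0,0,0) \<Longrightarrow> pt x y z \<in> points"
  by (auto simp: points_def)

lemma pline_subset: "pline a b c \<subseteq> points"
  by (auto simp: pline_def)

lemma mem_pline_pt:
  assumes "(x,y,z) \<noteq> (0,0,0)"
  shows "pt x y z \<in> pline a b c \<longleftrightarrow> a*x + b*y + c*z = 0"
proof
  assume "pt x y z \<in> pline a b c"
  thus "a*x + b*y + c*z = 0" using pt_self[of x y z] by (auto simp: pline_def)
next
  assume h: "a*x + b*y + c*z = 0"
  have "a*(d*x) + b*(d*y) + c*(d*z) = d * (a*x + b*y + c*z)" for d
    by (simp add: algebra_simps)
  thus "pt x y z \<in> pline a b c" using h in_points[OF assms]
    by (auto simp: pline_def pt_def)
qed

lemma points_cases: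
  assumes "P \<in> points"
  obtains x y where "P = pt x y 1" | m where "P = pt 1 m 0" | "P = pt 0 1 0"
proof -
  obtain x y z where P: "P = pt x y z" "(x,y,z) \<noteq> (0,0,0)" using assms by (auto simp: points_def)
  show thesis
  proof (cases "z = 0")
    case False
    have "pt x y z = pt (x/z) (y/z) 1" using False
      by (subst pt_eq_iff) (auto intro!: exI[of _ "1/z"])
    thus thesis using that P by blast
  next
    case z: True
    show thesis
    proof (cases "x = 0")
      case False
      have "pt x y z = pt 1 (y/x) 0" using False z
        by (subst pt_eq_iff) (auto intro!: exI[of _ "1/x"])
      thus thesis using that P by blast
    next
      case True
      hence "y \<noteq> 0" using P z by auto
      have "pt x y z = pt 0 1 0" using \<open>y \<noteq> 0\<close> z True
        by (subst pt_eq_iff) (auto intro!: exI[of _ "1/y"])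
      thus thesis using that P by blast
    qed
  qed
qed

lemma points_vec:
  assumes "P \<in> points" obtains x y z where "P = pt x y z" "(x,y,z) \<noteq> (0,0,0)"
  using assms by (auto simp: points_def)

lemma pline_scale:
  fixes l :: "'a::field"
  assumes "l \<noteq> 0" shows "pline (l*a) (l*b) (l*c) = pline a b c"
proof -
  have "(l*a)*x + (l*b)*y + (l*c)*z = l * (a*x+b*y+c*z)" for x y z by (simp add: algebra_simps)
  thus ?thesis using assms by (auto simp: pline_def)
qed

lemma cross_zero:
  fixes x1 y1 z1 x2 y2 z2 :: "'a::field"
  assumes "(x1,y1,z1) \<noteq> (0,0,0)" "y1*z2 - z1*y2 = 0" "z1*x2 - x1*z2 = 0" "x1*y2 - y1*x2 = 0"
  shows "\<exists>c. x2 = c*x1 \<and> y2 = c*y1 \<and> z2 = c*z1"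
proof (cases "x1 = 0")
  case False
  have "y2 = x2/x1*y1" using False assms(4) by (simp add: field_simps)
  moreover have "z2 = x2/x1*z1" using False assms(3) by (simp add: field_simps)
  ultimately show ?thesis using False by (intro exI[of _ "x2/x1"]) simp
next
  case x: True
  show ?thesis
  proof (cases "y1 = 0")
    case False
    have "x2 = y2/y1*x1" using False x assms(4) by (simp add: field_simps)
    moreover have "z2 = y2/y1*z1" using False assms(2) by (simp add: field_simps)
    ultimately show ?thesis using False by (intro exI[of _ "y2/y1"]) simp
  next
    case True
    hence "z1 \<noteq> 0" using assms x by auto
    have "x2 = z2/z1*x1" using \<open>z1 \<noteq> 0\<close> x assms(3) by (simp add: field_simps)
    moreover have "y2 = z2/z1*y1" using \<open>z1 \<noteq> 0\<close> True assms(2) by (simp add: field_simps)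
    ultimately show ?thesis using \<open>z1 \<noteq> 0\<close> by (intro exI[of _ "z2/z1"]) simp
  qed
qed

lemma join_exists:
  assumes "P \<in> points" "R \<in> points" "P \<noteq> R"
  shows "\<exists>l\<in>lines. P \<in> l \<and> R \<in> l"
proof -
  obtain x1 y1 z1 where P: "P = pt x1 y1 z1" "(x1,y1,z1) \<noteq> (0,0,0)" using assms points_vec by metis
  obtain x2 y2 z2 where R: "R = pt x2 y2 z2" "(x2,y2,z2) \<noteq> (0,0,0)" using assms points_vec by metis
  define a where "a = y1*z2 - z1*y2"
  define b where "b = z1*x2 - x1*z2"
  define c where "c = x1*y2 - y1*x2"
  have "(a,b,c) \<noteq> (0,0,0)"
  proof
    assume "(a,b,c) = (0,0,0)"
    hence "\<exists>d. x2 = d*x1 \<and> y2 = d*y1 \<and> z2 = d*z1"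
      by (intro cross_zero[OF P(2)]) (auto simp: a_def b_def c_def)
    then obtain d where d: "x2 = d*x1 \<and> y2 = d*y1 \<and> z2 = d*z1" by blast
    hence "d \<noteq> 0" using R(2) by auto
    hence "P = R" using d P R pt_scale by metis
    thus False using assms by simp
  qed
  moreover have "P \<in> pline a b c" unfolding P(1) using P(2)
    by (subst mem_pline_pt) (auto simp: a_def b_def c_def algebra_simps)
  moreover have "R \<in> pline a b c" unfolding R(1) using R(2)
    by (subst mem_pline_pt) (auto simp: a_def b_def c_def algebra_simps)
  ultimately show ?thesis by (auto simp: lines_def)
qed

lemma line_unique:
  assumes "l1 \<in> lines" "l2 \<in> lines" "P \<noteq> R" "P \<in> l1" "R \<in> l1" "P \<in> l2" "R \<in> l2"
  shows "l1 = l2"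
proof -
  have Pp: "P \<in> points" "R \<in> points" using assms pline_subset by (auto simp: lines_def)
  obtain x1 y1 z1 where P: "P = pt x1 y1 z1" "(x1,y1,z1) \<noteq> (0,0,0)" using Pp points_vec by metis
  obtain x2 y2 z2 where R: "R = pt x2 y2 z2" "(x2,y2,z2) \<noteq> (0,0,0)" using Pp points_vec by metis
  define a where "a = y1*z2 - z1*y2"
  define b where "b = z1*x2 - x1*z2"
  define c where "c = x1*y2 - y1*x2"
  have abc: "(a,b,c) \<noteq> (0,0,0)"
  proof
    assume "(a,b,c) = (0,0,0)"
    hence "\<exists>d. x2 = d*x1 \<and> y2 = d*y1 \<and> z2 = d*z1"
      by (intro cross_zero[OF P(2)]) (auto simp: a_def b_def c_def)
    then obtain d where d: "x2 = d*x1 \<and> y2 = d*y1 \<and> z2 = d*z1" by blast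
    hence "d \<noteq> 0" using R(2) by auto
    hence "P = R" using d P R pt_scale by metis
    thus False using assms by simp
  qed
  have key: "l = pline a b c" if l: "l \<in> lines" "P \<in> l" "R \<in> l" for l
  proof -
    obtain a' b' c' where l': "l = pline a' b' c'" "(a',b',c') \<noteq> (0,0,0)" using l by (auto simp: lines_def)
    have e1: "a'*x1 + b'*y1 + c'*z1 = 0" using l l' P mem_pline_pt by metis
    have e2: "a'*x2 + b'*y2 + c'*z2 = 0" using l l' R mem_pline_pt by metis
    have "b'*c - c'*b = x1 * (a'*x2 + b'*y2 + c'*z2) - x2 * (a'*x1 + b'*y1 + c'*z1)"
      unfolding a_def b_def c_def by (simp add: algebra_simps)
    hence 1: "b'*c - c'*b = 0" using e1 e2 by simp
    have "c'*a - a'*c = y1 * (a'*x2 + b'*y2 + c'*z2) - y2 * (a'*x1 + b'*y1 + c'*z1)"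
      unfolding a_def b_def c_def by (simp add: algebra_simps)
    hence 2: "c'*a - a'*c = 0" using e1 e2 by simp
    have "a'*b - b'*a = z1 * (a'*x2 + b'*y2 + c'*z2) - z2 * (a'*x1 + b'*y1 + c'*z1)"
      unfolding a_def b_def c_def by (simp add: algebra_simps)
    hence 3: "a'*b - b'*a = 0" using e1 e2 by simp
    note 1 2 3
    have "\<exists>d. a = d*a' \<and> b = d*b' \<and> c = d*c'"
      by (rule cross_zero[OF l'(2)]) (use 1 2 3 in \<open>simp_all add: algebra_simps\<close>)
    then obtain d where d: "a = d*a' \<and> b = d*b' \<and> c = d*c'" by blast
    hence "d \<noteq> 0" using abc by auto
    thus ?thesis using d l' pline_scale by metis
  qed
  show ?thesis using key assms by metis
qed

abbreviation Aff :: "'a::field \<Rightarrow> 'a \<Rightarrow> 'a ppoint" where "Aff x y \<equiv> pt x y 1"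
abbreviation Dir :: "'a::field \<Rightarrow> 'a ppoint" where "Dir m \<equiv> pt 1 m 0"
abbreviation Pinf :: "'a::field ppoint" where "Pinf \<equiv> pt 0 1 0"

lemma Aff_eq_iff [simp]: "Aff x y = Aff x' y' \<longleftrightarrow> x = x' \<and> y = y'"
  by (subst pt_eq_iff) auto

lemma Dir_eq_iff [simp]: "Dir m = Dir m' \<longleftrightarrow> m = m'"
  by (subst pt_eq_iff) auto

lemma Aff_ne_Dir [simp]: "Aff x y \<noteq> Dir m" "Dir m \<noteq> Aff x y"
  by (subst pt_eq_iff; auto)+

lemma Aff_ne_Pinf [simp]: "Aff x y \<noteq> Pinf" "Pinf \<noteq> Aff x y"
  by (subst pt_eq_iff; auto)+

lemma Dir_ne_Pinf [simp]: "Dir m \<noteq> Pinf" "Pinf \<noteq> Dir m"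
  by (subst pt_eq_iff; auto)+

lemma Aff_points [simp]: "Aff x y \<in> points" and Dir_points [simp]: "Dir m \<in> points"
  and Pinf_points [simp]: "Pinf \<in> points"
  by (auto intro: in_points)

lemma Aff_pline [simp]: "Aff x y \<in> pline a b c \<longleftrightarrow> a*x + b*y + c = 0"
  by (subst mem_pline_pt) auto
lemma Dir_pline [simp]: "Dir m \<in> pline a b c \<longleftrightarrow> a + b*m = 0"
  by (subst mem_pline_pt) auto
lemma Pinf_pline [simp]: "Pinf \<in> pline a b c \<longleftrightarrow> b = 0"
  by (subst mem_pline_pt) auto

lemma Aff_linf [simp]: "Aff x y \<notin> line_inf" and Dir_linf [simp]: "Dir m \<in> line_inf"
  and Pinf_linf [simp]: "Pinf \<in> line_inf"
  by (auto simp: line_inf_def)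

lemma linf_lines: "line_inf \<in> lines"
  unfolding line_inf_def lines_def by (intro CollectI exI[of _ 0] exI[of _ 1]) simp

lemma pline_lines: "(a,b,c) \<noteq> (0,0,0) \<Longrightarrow> pline a b c \<in> lines"
  by (auto simp: lines_def)

lemma lines_cases:
  assumes "l \<in> lines"
  obtains "l = line_inf" | k where "l = pline 1 0 (-k)" | m k where "l = pline m (-1) k"
proof -
  obtain a b c where l: "l = pline a b c" "(a,b,c) \<noteq> (0,0,0)" using assms by (auto simp: lines_def)
  show thesis
  proof (cases "b = 0")
    case False
    have "pline a b c = pline (-a/b) (-1) (-c/b)"
      using pline_scale[of "-1/b" a b c] False by simp
    thus thesis using that l by blast
  next
    case b: True
    show thesis
    proof (cases "a = 0")
      case False
      have "pline a b c = pline 1 0 (- (-(c/a)))"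
        using pline_scale[of "1/a" a b c] False b by simp
      thus thesis using that(2)[of "-(c/a)"] l by blast
    next
      case True
      hence "c \<noteq> 0" using l b by auto
      have "pline a b c = line_inf"
        using pline_scale[of "1/c" a b c] \<open>c \<noteq> 0\<close> b True by (simp add: line_inf_def)
      thus thesis using that l by blast
    qed
  qed
qed

lemma line_two_points:
  assumes "l \<in> lines" obtains P R where "P \<in> l" "R \<in> l" "P \<noteq> R"
proof (cases rule: lines_cases[OF assms])
  case 1 thus thesis using that[of "Dir 0" Pinf] by (simp add: line_inf_def)
next
  case (2 k) thus thesis using that[of "Aff k 0" Pinf] by simp
next
  case (3 m k) thus thesis using that[of "Aff 0 k" "Dir m"] by simp
qed

lemma lines_subset: "l \<in> lines \<Longrightarrow> l \<subseteq> points"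
  using pline_subset by (auto simp: lines_def)

lemma finite_ppoint_set [simp]: "finite (S :: ('a::finite) ppoint set)"
  by (rule finite_subset[of _ UNIV]) auto

lemma coll_inj: "collineation \<sigma> \<Longrightarrow> inj_on \<sigma> points"
  by (auto simp: collineation_def bij_betw_def)

lemma coll_lines_onto:
  assumes c: "collineation \<sigma>" and l': "l' \<in> lines"
  shows "\<exists>l\<in>lines. \<sigma> ` l = l'"
proof -
  obtain P R where PR: "P \<in> l'" "R \<in> l'" "P \<noteq> R" using line_two_points[OF l'] by blast
  have bij: "bij_betw \<sigma> points points" using c by (simp add: collineation_def)
  have Pp: "P \<in> points" "R \<in> points" using PR l' lines_subset by auto
  obtain P0 where P0: "P0 \<in> points" "\<sigma> P0 = P" using bij Pp by (metis bij_betw_imp_surj_on imageE)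
  obtain R0 where R0: "R0 \<in> points" "\<sigma> R0 = R" using bij Pp by (metis bij_betw_imp_surj_on imageE)
  have "P0 \<noteq> R0" using P0 R0 PR by auto
  then obtain l where l: "l \<in> lines" "P0 \<in> l" "R0 \<in> l" using join_exists P0 R0 by metis
  have "\<sigma> ` l \<in> lines" using c l by (simp add: collineation_def)
  moreover have "P \<in> \<sigma> ` l" "R \<in> \<sigma> ` l" using l P0 R0 by auto
  ultimately have "\<sigma> ` l = l'" using line_unique[OF _ l' PR(3)] PR by blast
  thus ?thesis using l by blast
qed

lemma coll_image_Int:
  assumes "collineation \<sigma>" "A \<subseteq> points" "B \<subseteq> points"
  shows "\<sigma> ` (A \<inter> B) = \<sigma> ` A \<inter> \<sigma> ` B"
  using coll_inj[OF assms(1)] assms(2,3)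
  by (intro inj_on_image_Int) auto

lemma arc_subset: "is_arc S \<Longrightarrow> T \<subseteq> S \<Longrightarrow> is_arc (T :: ('a::{field,finite}) ppoint set)"
  unfolding is_arc_def
proof (intro ballI)
  fix l :: "'a ppoint set" assume "\<forall>l\<in>lines. card (l \<inter> S) \<le> 2" "T \<subseteq> S" "l \<in> lines"
  moreover have "card (l \<inter> T) \<le> card (l \<inter> S)" using \<open>T \<subseteq> S\<close> by (intro card_mono) auto
  ultimately show "card (l \<inter> T) \<le> 2" by auto
qed

lemma arc_transport:
  fixes S :: "('a::{field,finite}) ppoint set" and \<sigma> :: "'a ppoint \<Rightarrow> 'a ppoint"
  assumes c: "collineation \<sigma>" and S: "S \<subseteq> points" and arc: "is_arc S"
  shows "is_arc (\<sigma> ` S)"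
  unfolding is_arc_def
proof
  fix l :: "'a ppoint set" assume l: "l \<in> lines"
  obtain l0 where l0: "l0 \<in> lines" "\<sigma> ` l0 = l" using coll_lines_onto[OF c l] by blast
  have "l \<inter> \<sigma> ` S = \<sigma> ` (l0 \<inter> S)" using coll_image_Int[OF c lines_subset[OF l0(1)] S] l0 by simp
  hence "card (l \<inter> \<sigma> ` S) \<le> card (l0 \<inter> S)" by (simp add: card_image_le)
  also have "\<dots> \<le> 2" using arc l0 by (simp add: is_arc_def)
  finally show "card (l \<inter> \<sigma> ` S) \<le> 2" .
qed

lemma pedal_transport:
  fixes U :: "('a::{field,finite}) ppoint set" and \<sigma> :: "'a ppoint \<Rightarrow> 'a ppoint"
  assumes c: "collineation \<sigma>" and U: "U \<subseteq> points" and Q: "Q \<in> points"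
  shows "pedal (\<sigma> ` U) (\<sigma> Q) \<subseteq> \<sigma> ` pedal U Q"
proof
  fix P assume "P \<in> pedal (\<sigma> ` U) (\<sigma> Q)"
  then obtain l where l: "l \<in> lines" "card (l \<inter> \<sigma> ` U) = 1" "\<sigma> Q \<in> l" "l \<inter> \<sigma> ` U = {P}"
    by (auto simp: pedal_def tangent_lines_def)
  obtain l0 where l0: "l0 \<in> lines" "\<sigma> ` l0 = l" using coll_lines_onto[OF c l(1)] by blast
  have e: "l \<inter> \<sigma> ` U = \<sigma> ` (l0 \<inter> U)" using coll_image_Int[OF c lines_subset[OF l0(1)] U] l0 by simp
  hence e2: "\<sigma> ` (l0 \<inter> U) = {P}" using l(4) by simp
  then obtain P0 where P0a: "P0 \<in> l0 \<inter> U" "\<sigma> P0 = P" by (metis imageE insertI1)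
  have "l0 \<inter> U = {P0}"
  proof (intro equalityI subsetI)
    fix P1 assume P1: "P1 \<in> l0 \<inter> U"
    hence "\<sigma> P1 = P" using e2 by blast
    moreover have "P1 \<in> points" "P0 \<in> points" using P1 P0a U by auto
    ultimately have "P1 = P0" using P0a coll_inj[OF c] by (metis inj_on_def)
    thus "P1 \<in> {P0}" by simp
  qed (use P0a in auto)
  note P0 = this P0a(2)
  have "Q \<in> l0"
  proof -
    obtain Q0 where "Q0 \<in> l0" "\<sigma> Q0 = \<sigma> Q" using l(3) l0 by auto
    moreover have "Q0 \<in> points" using \<open>Q0 \<in> l0\<close> lines_subset[OF l0(1)] by auto
    ultimately show ?thesis using coll_inj[OF c] Q by (metis inj_on_def)
  qed
  hence "P0 \<in> pedal U Q" using l0 P0 by (auto simp: pedal_def tangent_lines_def)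
  thus "P \<in> \<sigma> ` pedal U Q" using P0 by auto
qed

locale fq =
  fixes q :: nat and ty :: "'a::{field,finite} itself"
  assumes cardq: "card (UNIV::'a set) = q^2" and oddq: "odd q"
begin

lemma frob_add: "((x::'a) + y) ^ q = x ^ q + y ^ q"
  using frob_add[OF cardq] .

lemma frob_neg: "(- (x::'a)) ^ q = - (x ^ q)"
  using oddq by (simp add: power_minus_odd)

lemma frob_diff: "((x::'a) - y) ^ q = x ^ q - y ^ q"
  using frob_add[of x "-y"] frob_neg[of y] by simp

lemma frob_invol: "((x::'a) ^ q) ^ q = x"
proof -
  have "(x ^ q) ^ q = x ^ card (UNIV::'a set)" by (simp add: cardq power_mult[symmetric] power2_eq_square)
  thus ?thesis by (simp add: power_card_same)
qed

lemma q_ge3: "q \<ge> 3"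
proof -
  have "card (UNIV::'a set) \<ge> 2"
  proof -
    have "card {0::'a, 1} \<le> card (UNIV::'a set)" by (intro card_mono) auto
    thus ?thesis by simp
  qed
  moreover have "q \<noteq> 0"
  proof
    assume "q = 0" thus False using calculation cardq by simp
  qed
  moreover have "q \<noteq> 1"
  proof
    assume "q = 1" thus False using calculation cardq by simp
  qed
  ultimately have "q \<ge> 2" by linarith
  thus ?thesis using oddq by presburger
qed

lemma two_ne0: "(2::'a) \<noteq> 0"
proof
  assume "(2::'a) = 0"
  hence "of_nat 2 = (0::'a)" by simp
  hence "CHAR('a) dvd 2" by (simp only: of_nat_eq_0_iff_char_dvd)
  moreover have "CHAR('a) dvd q^2"
  proof -
    have "q \<ge> 3" by (rule q_ge3)
    hence "3^2 \<le> q^2" by (intro power_mono) auto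
    hence "q^2 \<noteq> 1" by auto
    then obtain r where r: "prime r" "r dvd q^2" using prime_factor_nat by blast
    hence "r = CHAR('a)" using prime_dvd_card_is_char[where 'a='a] cardq by metis
    thus ?thesis using r by simp
  qed
  moreover have "prime CHAR('a)"
    using prime_CHAR_semidom finite_imp_CHAR_pos[OF finite_UNIV] by blast
  ultimately have "CHAR('a) = 2" "2 dvd q^2"
    using primes_dvd_imp_eq[of "CHAR('a)" 2] by auto
  thus False using oddq by simp
qed

lemma exists_nonF: "\<exists>e::'a. e ^ q \<noteq> e"
proof (rule ccontr)
  assume "\<not> ?thesis"
  hence all: "\<forall>e::'a. e ^ q = e" by simp
  define p :: "'a poly" where "p = monom 1 q - [:0, 1:]"
  have dq: "degree (monom (1::'a) q) = q" by (simp add: degree_monom_eq)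
  have "p = monom 1 q + (- [:0, 1:])" by (simp add: p_def)
  also have "degree \<dots> = q" using q_ge3 
    by (subst degree_add_eq_left) (auto simp: dq)
  finally have dp: "degree p = q" .
  hence "p \<noteq> 0" using q_ge3 by auto
  have "{x. poly p x = 0} = UNIV" using all by (auto simp: p_def poly_monom)
  hence "card (UNIV::'a set) \<le> q" using card_poly_roots_bound[OF \<open>p \<noteq> 0\<close>] dp by simp
  thus False using cardq q_ge3 by (simp add: power2_eq_square)
qed

lemma subF_add: "a \<in> subF q \<Longrightarrow> b \<in> subF q \<Longrightarrow> (a::'a) + b \<in> subF q"
  by (simp add: subF_def frob_add)
lemma subF_diff: "a \<in> subF q \<Longrightarrow> b \<in> subF q \<Longrightarrow> (a::'a) - b \<in> subF q"
  by (simp add: subF_def frob_diff)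
lemma subF_0: "(0::'a) \<in> subF q"
  using q_ge3 by (simp add: subF_def)

lemma U_ab_points: "U_ab q \<alpha> \<beta> \<subseteq> (points :: 'a ppoint set)"
  by (auto simp: U_ab_def)

lemma Aff_U_ab: "Aff u v \<in> U_ab q \<alpha> \<beta> \<longleftrightarrow> (v - \<alpha>*u^2 - \<beta>*u^(q+1) :: 'a) \<in> subF q"
proof
  assume "Aff u v \<in> U_ab q \<alpha> \<beta>"
  then obtain x r where "Aff u v = Aff x (\<alpha> * x ^ 2 + \<beta> * x ^ (q + 1) + r)" "r \<in> subF q"
    by (auto simp: U_ab_def)
  thus "(v - \<alpha>*u^2 - \<beta>*u^(q+1)) \<in> subF q" by simp
next
  assume "(v - \<alpha>*u^2 - \<beta>*u^(q+1)) \<in> subF q"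
  thus "Aff u v \<in> U_ab q \<alpha> \<beta>" unfolding U_ab_def
    by (intro UnI1 CollectI exI[of _ u] exI[of _ "v - \<alpha>*u^2 - \<beta>*u^(q+1)"]) simp
qed

lemma Dir_U_ab: "Dir m \<notin> U_ab q \<alpha> (\<beta>::'a)"
  by (auto simp: U_ab_def)

lemma Pinf_U_ab: "Pinf \<in> U_ab q \<alpha> (\<beta>::'a)"
  by (auto simp: U_ab_def)

lemma beta_term_F: "(\<beta>::'a) ^ q = \<beta> \<Longrightarrow> \<beta> * u^(q+1) \<in> subF q"
proof -
  assume b: "\<beta> ^ q = \<beta>"
  have "(u^(q+1))^q = u^q * (u^q)^q" by (simp add: power_mult_distrib power_add power_mult[symmetric] mult.commute)
  also have "\<dots> = u^(q+1)" by (simp add: frob_invol mult.commute)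
  finally show ?thesis using b by (simp add: subF_def power_mult_distrib)
qed

lemma Aff_U_ab_F:
  assumes "(\<beta>::'a) ^ q = \<beta>"
  shows "Aff u v \<in> U_ab q \<alpha> \<beta> \<longleftrightarrow> v - \<alpha>*u^2 \<in> subF q"
proof -
  have "v - \<alpha>*u^2 = (v - \<alpha>*u^2 - \<beta>*u^(q+1)) + \<beta>*u^(q+1)" by simp
  moreover have "v - \<alpha>*u^2 - \<beta>*u^(q+1) = (v - \<alpha>*u^2) - \<beta>*u^(q+1)" by simp
  ultimately show ?thesis using beta_term_F[OF assms, of u] subF_add subF_diff Aff_U_ab by metis
qed

lemma pedal_sub:
  fixes \<alpha> \<beta> a0 b0 :: 'a
  assumes b: "\<beta> ^ q = \<beta>" and a: "\<alpha> \<noteq> 0"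
  shows "pedal (U_ab q \<alpha> \<beta>) (Aff a0 b0) \<subseteq> {Aff x (2*\<alpha>*x^2 - 2*\<alpha>*a0*x + b0) | x. True}"
proof
  fix P assume "P \<in> pedal (U_ab q \<alpha> \<beta>) (Aff a0 b0)"
  then obtain l where l: "l \<in> lines" "Aff a0 b0 \<in> l" "l \<inter> U_ab q \<alpha> \<beta> = {P}"
    by (auto simp: pedal_def tangent_lines_def)
  show "P \<in> {Aff x (2*\<alpha>*x^2 - 2*\<alpha>*a0*x + b0) | x. True}"
  proof (cases rule: lines_cases[OF l(1)])
    case 1 thus ?thesis using l by simp
  next
    case (2 k)
    hence k: "k = a0" using l by simp
    have "Pinf \<in> l \<inter> U_ab q \<alpha> \<beta>" using 2 Pinf_U_ab by simp
    moreover have "Aff a0 (\<alpha>*a0^2) \<in> l \<inter> U_ab q \<alpha> \<beta>" using 2 k Aff_U_ab_F[OF b] subF_0 by simp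
    ultimately show ?thesis using l(3) by (metis Aff_ne_Pinf(1) singletonD)
  next
    case (3 m k)
    have Pl: "P \<in> l" "P \<in> U_ab q \<alpha> \<beta>" using l(3) by auto
    hence "P \<in> points" using U_ab_points by auto
    then obtain x0 y0 where P: "P = Aff x0 y0"
      using Pl 3 Dir_U_ab by (cases rule: points_cases) auto
    have h: "m*x0 - y0 + k = 0" using Pl P 3 by simp
    have "y0 = m*x0 + k - (m*x0 - y0 + k)" by (simp add: algebra_simps)
    hence y0: "y0 = m*x0 + k" using h by simp
    have inU: "y0 - \<alpha>*x0^2 \<in> subF q" using Pl P Aff_U_ab_F[OF b] by simp
    have m: "m = 2*\<alpha>*x0"
    proof (rule ccontr)
      assume ne: "m \<noteq> 2*\<alpha>*x0"
      define u where "u = (m - 2*\<alpha>*x0)/\<alpha>"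
      have u0: "u \<noteq> 0" using ne a by (simp add: u_def)
      have "m*(x0+u) + k - \<alpha>*(x0+u)^2 = (y0 - \<alpha>*x0^2) + u*(m - 2*\<alpha>*x0 - \<alpha>*u)"
        using y0 by (simp add: algebra_simps power2_eq_square)
      also have "m - 2*\<alpha>*x0 - \<alpha>*u = 0" using a by (simp add: u_def)
      finally have eq: "m*(x0+u) + k - \<alpha>*(x0+u)^2 = y0 - \<alpha>*x0^2" by simp
      have "Aff (x0+u) (m*(x0+u) + k) \<in> U_ab q \<alpha> \<beta>"
        by (subst Aff_U_ab_F[OF b]) (simp only: eq inU)
      moreover have "Aff (x0+u) (m*(x0+u) + k) \<in> l" using 3 by simp
      ultimately have "Aff (x0+u) (m*(x0+u) + k) \<in> l \<inter> U_ab q \<alpha> \<beta>" by blast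
      hence "Aff (x0+u) (m*(x0+u) + k) = P" using l(3) by blast
      thus False using P u0 by simp
    qed
    have h2: "m*a0 - b0 + k = 0" using l(2) 3 by simp
    have "b0 = m*a0 + k - (m*a0 - b0 + k)" by (simp add: algebra_simps)
    hence "b0 = m*a0 + k" using h2 by simp
    hence "y0 = 2*\<alpha>*x0^2 - 2*\<alpha>*a0*x0 + b0" using y0 m by (simp add: algebra_simps power2_eq_square)
    thus ?thesis using P by blast
  qed
qed

end

lemma quad_roots_card:
  fixes c2 c1 c0 :: "'a::{field,finite}"
  assumes "c2 \<noteq> 0"
  shows "card {x. c2*x^2 + c1*x + c0 = 0} \<le> 2"
proof (cases "{x. c2*x^2 + c1*x + c0 = 0} = {}")
  case False
  then obtain x1 where x1: "c2*x1^2 + c1*x1 + c0 = 0" by auto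
  have "{x. c2*x^2 + c1*x + c0 = 0} \<subseteq> {x1, -c1/c2 - x1}"
  proof
    fix x assume "x \<in> {x. c2*x^2 + c1*x + c0 = 0}"
    hence "c2*x^2 + c1*x + c0 = 0" by simp
    moreover have "(x - x1) * (c2*(x + x1) + c1) = (c2*x^2 + c1*x + c0) - (c2*x1^2 + c1*x1 + c0)"
      by (simp add: algebra_simps power2_eq_square)
    ultimately have "(x - x1) * (c2*(x + x1) + c1) = 0" using x1 by simp
    hence "x = x1 \<or> c2*(x + x1) + c1 = 0" by simp
    moreover have "x = (c2*(x + x1) + c1)/c2 - c1/c2 - x1" using assms by (simp add: field_simps)
    ultimately show "x \<in> {x1, -c1/c2 - x1}" by auto
  qed
  hence "card {x. c2*x^2 + c1*x + c0 = 0} \<le> card {x1, -c1/c2 - x1}" by (intro card_mono) auto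
  also have "\<dots> \<le> 2" by (simp add: card_insert_le_m1)
  finally show ?thesis .
qed simp

lemma parabola_arc:
  fixes c2 c1 c0 :: "'a::{field,finite}"
  assumes "c2 \<noteq> 0"
  shows "is_arc {Aff x (c2*x^2 + c1*x + c0) | x. True}"
  unfolding is_arc_def
proof
  fix l :: "'a ppoint set" assume l: "l \<in> lines"
  let ?G = "{Aff x (c2*x^2 + c1*x + c0) | x. True}"
  show "card (l \<inter> ?G) \<le> 2"
  proof (cases rule: lines_cases[OF l])
    case 1 hence "l \<inter> ?G = {}" by auto
    thus ?thesis by simp
  next
    case (2 k)
    have "l \<inter> ?G \<subseteq> {Aff k (c2*k^2 + c1*k + c0)}" using 2 by auto
    hence "card (l \<inter> ?G) \<le> card {Aff k (c2*k^2 + c1*k + c0)}" by (intro card_mono) auto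
    hence "card (l \<inter> ?G) \<le> 1" by simp
    thus ?thesis by simp
  next
    case (3 m k)
    have "l \<inter> ?G \<subseteq> (\<lambda>x. Aff x (c2*x^2 + c1*x + c0)) ` {x. c2*x^2 + (c1 - m)*x + (c0 - k) = 0}"
    proof
      fix P assume "P \<in> l \<inter> ?G"
      then obtain x where x: "P = Aff x (c2*x^2 + c1*x + c0)" "m*x + (-1)*(c2*x^2 + c1*x + c0) + k = 0"
        using 3 by auto
      have eq: "c2*x^2 + (c1 - m)*x + (c0 - k) = -(m*x + (-1)*(c2*x^2 + c1*x + c0) + k)"
        by (simp add: algebra_simps)
      hence "c2*x^2 + (c1 - m)*x + (c0 - k) = 0" using x(2) by (metis minus_zero)
      thus "P \<in> (\<lambda>x. Aff x (c2*x^2 + c1*x + c0)) ` {x. c2*x^2 + (c1 - m)*x + (c0 - k) = 0}"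
        using x(1) by blast
    qed
    hence "card (l \<inter> ?G) \<le> card ((\<lambda>x. Aff x (c2*x^2 + c1*x + c0)) ` {x. c2*x^2 + (c1 - m)*x + (c0 - k) = 0})"
      by (intro card_mono) auto
    also have "\<dots> \<le> card {x. c2*x^2 + (c1 - m)*x + (c0 - k) = 0}" by (rule card_image_le) auto
    also have "\<dots> \<le> 2" by (rule quad_roots_card[OF assms])
    finally show ?thesis .
  qed
qed

definition qf :: "'a::comm_ring_1 \<Rightarrow> 'a \<Rightarrow> 'a \<Rightarrow> 'a \<Rightarrow> 'a \<Rightarrow> 'a \<Rightarrow> 'a \<Rightarrow> 'a \<Rightarrow> 'a \<Rightarrow> 'a" where
  "qf a b c d e f x y z = a * x^2 + b * y^2 + c * z^2 + d * x * y + e * x * z + f * y * z"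

definition conicset :: "'a::field \<Rightarrow> 'a \<Rightarrow> 'a \<Rightarrow> 'a \<Rightarrow> 'a \<Rightarrow> 'a \<Rightarrow> 'a ppoint set" where
  "conicset a b c d e f = {P \<in> points. \<forall>(x, y, z) \<in> P.
                 a * x^2 + b * y^2 + c * z^2 + d * x * y + e * x * z + f * y * z = 0}"

lemma conicset_pt:
  assumes "(x,y,z) \<noteq> (0,0,0)"
  shows "pt x y z \<in> conicset a b c d e f \<longleftrightarrow> qf a b c d e f x y z = 0"
proof
  assume "pt x y z \<in> conicset a b c d e f"
  thus "qf a b c d e f x y z = 0" using pt_self[of x y z] by (auto simp: conicset_def qf_def)
next
  assume h: "qf a b c d e f x y z = 0"
  have "qf a b c d e f (k*x) (k*y) (k*z) = k^2 * qf a b c d e f x y z" for k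
    by (simp add: qf_def algebra_simps power2_eq_square)
  hence "qf a b c d e f (k*x) (k*y) (k*z) = 0" for k using h by simp
  thus "pt x y z \<in> conicset a b c d e f" using in_points[OF assms]
    by (auto simp: conicset_def pt_def qf_def)
qed

lemma conic_Aff: "Aff x y \<in> conicset a b c d e f \<longleftrightarrow> a*x^2 + b*y^2 + c + d*x*y + e*x + f*y = 0"
  by (subst conicset_pt) (auto simp: qf_def)
lemma conic_Dir: "Dir m \<in> conicset a b c d e f \<longleftrightarrow> a + b*m^2 + d*m = 0"
  by (subst conicset_pt) (auto simp: qf_def)
lemma conic_Pinf: "Pinf \<in> conicset a b c d e f \<longleftrightarrow> b = 0"
  by (subst conicset_pt) (auto simp: qf_def)

lemma nondeg_conic_iff: "nondeg_conic C \<longleftrightarrow> (\<exists>a b c d e f.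
        (2*a) * ((2*b) * (2*c) - f * f) - d * (d * (2*c) - f * e) + e * (d * f - (2*b) * e) \<noteq> 0
        \<and> C = conicset a b c d e f)"
  by (simp add: nondeg_conic_def conicset_def)

locale bm = fq q ty for q and ty :: "'a::{field,finite} itself" +
  fixes \<alpha> \<beta> :: 'a
  assumes BM: "BM_params_ok q \<alpha> \<beta>"
begin

definition mU :: "'a \<Rightarrow> 'a" where "mU x0 = 2*\<alpha>*x0 + (\<beta> - \<beta>^q)*x0^q"

lemma tangent_U:
  assumes P: "Aff x0 y0 \<in> U_ab q \<alpha> \<beta>" and u: "u \<noteq> 0"
  shows "Aff (x0+u) (y0 + mU x0 * u) \<notin> U_ab q \<alpha> \<beta>"
proof
  assume P1: "Aff (x0+u) (y0 + mU x0 * u) \<in> U_ab q \<alpha> \<beta>"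
  define X where "X = x0^q"
  define V where "V = u^q"
  define \<beta>' where "\<beta>' = \<beta>^q"
  define \<alpha>' where "\<alpha>' = \<alpha>^q"
  have XX: "X^q = x0" and VV: "V^q = u" and bb: "\<beta>'^q = \<beta>" and aa: "\<alpha>'^q = \<alpha>"
    by (simp_all only: X_def V_def \<beta>'_def \<alpha>'_def frob_invol)
  have V0: "V \<noteq> 0" using u by (simp add: V_def)
  define w0 where "w0 = y0 - \<alpha>*x0^2 - \<beta>*x0^(q+1)"
  define w1 where "w1 = (y0 + mU x0 * u) - \<alpha>*(x0+u)^2 - \<beta>*(x0+u)^(q+1)"
  have w0: "w0 \<in> subF q" using P by (simp add: Aff_U_ab w0_def)
  have w1: "w1 \<in> subF q" using P1 by (simp add: Aff_U_ab w1_def)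
  have p1: "(x0+u)^(q+1) = (X + V) * (x0 + u)" by (simp add: X_def V_def frob_add)
  have p0: "x0^(q+1) = X * x0" by (simp add: X_def)
  define E where "E = - \<beta>' * X * u - \<beta> * x0 * V"
  have diff: "w1 - w0 = E - (\<alpha>*u^2 + \<beta>*u*V)"
    unfolding w1_def w0_def p1 p0 E_def mU_def
    by (simp add: X_def[symmetric] \<beta>'_def[symmetric] algebra_simps power2_eq_square)
  have EF: "E \<in> subF q"
  proof -
    have "E^q = - (\<beta>'^q * X^q * u^q) - \<beta>^q * x0^q * V^q"
      unfolding E_def by (simp add: frob_diff frob_neg power_mult_distrib)
    also have "\<dots> = E" by (simp add: XX VV bb E_def X_def[symmetric] V_def[symmetric] \<beta>'_def[symmetric])
    finally show ?thesis by (simp add: subF_def)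
  qed
  have "\<alpha>*u^2 + \<beta>*u*V = E - (w1 - w0)" using diff by simp
  hence gF: "\<alpha>*u^2 + \<beta>*u*V \<in> subF q" using EF w0 w1 subF_diff by metis
  have u2: "(u^2)^q = V^2" unfolding V_def by (metis power_mult mult.commute)
  have "(\<alpha>*u^2 + \<beta>*u*V)^q = \<alpha>^q * (u^2)^q + \<beta>^q * u^q * V^q"
    by (simp only: frob_add power_mult_distrib)
  also have "\<dots> = \<alpha>'*V^2 + \<beta>'*V*u" by (simp only: u2 VV \<alpha>'_def[symmetric] \<beta>'_def[symmetric] V_def[symmetric])
  finally have "(\<alpha>*u^2 + \<beta>*u*V)^q = \<alpha>'*V^2 + \<beta>'*V*u" .
  hence eq: "\<alpha>*u^2 + \<beta>*u*V = \<alpha>'*V^2 + \<beta>'*V*u" using gF by (simp add: subF_def)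
  define s where "s = \<alpha>*u/V + \<alpha>'*V/u"
  have sq: "s^q = s"
  proof -
    have "s^q = \<alpha>^q*u^q/V^q + \<alpha>'^q*V^q/u^q" unfolding s_def by (simp only: frob_add power_divide power_mult_distrib)
    also have "\<dots> = \<alpha>'*V/u + \<alpha>*u/V" by (simp only: aa VV \<alpha>'_def[symmetric] V_def[symmetric])
    finally show ?thesis by (simp add: s_def)
  qed
  have z: "\<alpha>*u/V - \<alpha>'*V/u = \<beta>' - \<beta>"
  proof -
    have "\<alpha>*u/V - \<alpha>'*V/u = (\<alpha>*u^2 - \<alpha>'*V^2)/(u*V)" using u V0 by (simp add: field_simps power2_eq_square)
    also have "\<alpha>*u^2 - \<alpha>'*V^2 = (\<beta>' - \<beta>)*(u*V)" using eq by (simp add: algebra_simps)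
    finally show ?thesis using u V0 by simp
  qed
  have "s^2 = (\<alpha>*u/V - \<alpha>'*V/u)^2 + 4*\<alpha>*\<alpha>'"
    unfolding s_def using u V0 by (simp add: field_simps power2_eq_square)
  also have "\<dots> = (\<beta>' - \<beta>)^2 + 4*\<alpha>*\<alpha>'" by (simp only: z)
  also have "\<dots> = (\<beta>^q - \<beta>)^2 + 4*\<alpha>^(q+1)" by (simp add: \<beta>'_def \<alpha>'_def mult.commute)
  finally have "s^2 = (\<beta>^q - \<beta>)^2 + 4*\<alpha>^(q+1)" .
  thus False using BM sq by (auto simp: BM_params_ok_def nonsquare_in_subF_def subF_def)
qed

end


lemma card_fiber_sq:
  fixes s :: "'a::{field,finite}"
  shows "card {w. w^2 = s} \<le> 2"
proof -
  have "{w. w^2 = s} = {x. 1*x^2 + 0*x + (-s) = 0}" by auto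
  thus ?thesis using quad_roots_card[of "1::'a" 0 "-s"] by simp
qed

lemma squares_card:
  fixes t :: "'a::{field,finite} itself"
  shows "card (UNIV::'a set) + 1 \<le> 2 * card ((\<lambda>w::'a. w^2) ` UNIV)"
proof -
  let ?S = "(\<lambda>w::'a. w^2) ` UNIV"
  have "UNIV \<subseteq> insert 0 (\<Union>s\<in>?S - {0}. {w. w^2 = s})" by auto
  hence "card (UNIV::'a set) \<le> card (insert 0 (\<Union>s\<in>?S - {0}. {w. w^2 = s}))"
    by (intro card_mono) auto
  also have "\<dots> \<le> Suc (card (\<Union>s\<in>?S - {0}. {w. w^2 = s}))" by (rule card_insert_le_m1) auto
  also have "card (\<Union>s\<in>?S - {0}. {w. w^2 = s}) \<le> (\<Sum>s\<in>?S - {0}. card {w. w^2 = s})"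
    by (rule card_UN_le) auto
  also have "\<dots> \<le> (\<Sum>s\<in>?S - {0}. 2)" by (intro sum_mono card_fiber_sq)
  also have "\<dots> = 2 * card (?S - {0})" by simp
  also have "card (?S - {0}) = card ?S - 1" by (subst card_Diff_singleton) auto
  finally have "card (UNIV::'a set) \<le> Suc (2 * (card ?S - 1))" by simp
  moreover have "card ?S \<ge> 1" by (metis card_0_eq empty_not_UNIV finite_ppoint_set image_is_empty finite_imageI finite_UNIV less_one not_less rangeI empty_iff card_gt_0_iff)
  ultimately show ?thesis by linarith
qed

lemma exists_rep:
  fixes A D :: "'a::{field,finite}"
  assumes "A \<noteq> 0"
  shows "\<exists>w s. w^2 = D + A * s^2"
proof (rule ccontr)
  assume nex: "\<not> ?thesis"
  let ?S = "(\<lambda>w::'a. w^2) ` UNIV"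
  let ?T = "(\<lambda>z. D + A * z) ` ?S"
  have cT: "card ?T = card ?S" using assms by (intro card_image inj_onI) auto
  have "?S \<inter> ?T = {}" using nex by auto
  hence "card (?S \<union> ?T) = card ?S + card ?T" by (intro card_Un_disjoint) auto
  moreover have "card (?S \<union> ?T) \<le> card (UNIV::'a set)" by (intro card_mono) auto
  ultimately show False using squares_card[where 'a='a] cT by linarith
qed

definition DET :: "'a::comm_ring_1 \<Rightarrow> 'a \<Rightarrow> 'a \<Rightarrow> 'a \<Rightarrow> 'a \<Rightarrow> 'a \<Rightarrow> 'a" where
  "DET a b c d e f = (2*a) * ((2*b) * (2*c) - f * f) - d * (d * (2*c) - f * e) + e * (d * f - (2*b) * e)"

locale cbm = bm q ty \<alpha> \<beta> for q ty \<alpha> \<beta> +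
  fixes a b c d e f :: 'a
  assumes det: "DET a b c d e f \<noteq> 0"
    and sub: "conicset a b c d e f \<subseteq> U_ab q \<alpha> \<beta>"
begin

abbreviation "K \<equiv> conicset a b c d e f"

lemma Dir_notK: "a + b*m^2 + d*m \<noteq> 0"
  using sub Dir_U_ab conic_Dir by blast

lemma shift_identity:
  "a*(x0+u)^2 + b*(y0+t*u)^2 + c + d*(x0+u)*(y0+t*u) + e*(x0+u) + f*(y0+t*u)
   = (a*x0^2 + b*y0^2 + c + d*x0*y0 + e*x0 + f*y0)
     + u*((2*a*x0 + d*y0 + e) + t*(2*b*y0 + d*x0 + f)) + u^2*(a + b*t^2 + d*t)"
  by (simp add: algebra_simps power2_eq_square)

lemma second_point:
  assumes P: "Aff x0 y0 \<in> K" and L: "(2*a*x0 + d*y0 + e) + t*(2*b*y0 + d*x0 + f) \<noteq> 0"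
  shows "\<exists>u. u \<noteq> 0 \<and> Aff (x0+u) (y0+t*u) \<in> K"
proof -
  let ?L = "(2*a*x0 + d*y0 + e) + t*(2*b*y0 + d*x0 + f)"
  let ?Kt = "a + b*t^2 + d*t"
  have Kt: "?Kt \<noteq> 0" by (rule Dir_notK)
  define u where "u = - ?L / ?Kt"
  have u0: "u \<noteq> 0" unfolding u_def using L Kt by (metis divide_eq_0_iff neg_equal_0_iff_equal)
  have v0: "a*x0^2 + b*y0^2 + c + d*x0*y0 + e*x0 + f*y0 = 0" using P by (simp add: conic_Aff)
  have "u*?L + u^2*?Kt = u * (?L + u*?Kt)" by (simp add: algebra_simps power2_eq_square)
  also have "?L + u*?Kt = 0" using Kt by (simp add: u_def)
  finally have "u*?L + u^2*?Kt = 0" by simp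
  hence "Aff (x0+u) (y0+t*u) \<in> K" unfolding conic_Aff shift_identity v0 by simp
  thus ?thesis using u0 by blast
qed

lemma tangent_K:
  assumes P: "Aff x0 y0 \<in> K"
  shows "(2*a*x0 + d*y0 + e) + mU x0 * (2*b*y0 + d*x0 + f) = 0"
proof (rule ccontr)
  assume "\<not> ?thesis"
  then obtain u where u: "u \<noteq> 0" "Aff (x0+u) (y0 + mU x0 * u) \<in> K" using second_point[OF P] by blast
  have "Aff x0 y0 \<in> U_ab q \<alpha> \<beta>" using P sub by blast
  thus False using tangent_U u sub by blast
qed

lemma nonsingular:
  assumes P: "Aff x0 y0 \<in> K" and "2*a*x0 + d*y0 + e = 0" and "2*b*y0 + d*x0 + f = 0"
  shows False
proof -
  have v0: "a*x0^2 + b*y0^2 + c + d*x0*y0 + e*x0 + f*y0 = 0" using P by (simp add: conic_Aff)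
  have "e*x0 + f*y0 + 2*c = 2*(a*x0^2 + b*y0^2 + c + d*x0*y0 + e*x0 + f*y0)
          - x0*(2*a*x0 + d*y0 + e) - y0*(2*b*y0 + d*x0 + f)"
    by (simp add: algebra_simps power2_eq_square)
  hence z: "e*x0 + f*y0 + 2*c = 0" using assms v0 by simp
  have "DET a b c d e f = (2*a*x0 + d*y0 + e)*(d*f - 2*b*e) - (2*b*y0 + d*x0 + f)*(2*a*f - d*e)
      + (e*x0 + f*y0 + 2*c)*(4*a*b - d*d)"
    by (simp add: DET_def algebra_simps)
  hence "DET a b c d e f = 0" using assms z by simp
  thus False using det by simp
qed


lemma four_ne0: "(4::'a) \<noteq> 0"
proof -
  have "(4::'a) = 2*2" by simp
  thus ?thesis using two_ne0 by (metis mult_eq_0_iff)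
qed

lemma mU0: "mU 0 = 0"
  using q_ge3 by (simp add: mU_def)

lemma case_b0:
  assumes b0: "b = 0"
  shows "\<beta>^q = \<beta>"
proof -
  have a0: "a \<noteq> 0" using Dir_notK[of 0] b0 by simp
  have d0: "d = 0"
  proof (rule ccontr)
    assume "d \<noteq> 0"
    hence "a + b*(-a/d)^2 + d*(-a/d) = 0" using b0 by simp
    thus False using Dir_notK by blast
  qed
  have f0: "f \<noteq> 0"
  proof
    assume "f = 0"
    hence "DET a b c d e f = 0" using b0 d0 by (simp add: DET_def)
    thus False using det by simp
  qed
  have H: "2*a*x0 + e + mU x0 * f = 0" for x0
  proof -
    define y0 where "y0 = -(a*x0^2 + e*x0 + c)/f"
    have "Aff x0 y0 \<in> K" unfolding conic_Aff using b0 d0 f0 by (simp add: y0_def field_simps)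
    from tangent_K[OF this] show ?thesis using b0 d0 by simp
  qed
  have e0: "e = 0" using H[of 0] mU0 by simp
  obtain \<epsilon> :: 'a where eps: "\<epsilon>^q \<noteq> \<epsilon>" using exists_nonF by blast
  define \<delta> where "\<delta> = \<beta> - \<beta>^q"
  have H1: "2*a + (2*\<alpha> + \<delta>)*f = 0" using H[of 1] e0 by (simp add: mU_def \<delta>_def)
  have He: "2*a*\<epsilon> + (2*\<alpha>*\<epsilon> + \<delta>*\<epsilon>^q)*f = 0" using H[of \<epsilon>] e0 by (simp add: mU_def \<delta>_def)
  have "\<delta>*f*(\<epsilon>^q - \<epsilon>) = (2*a*\<epsilon> + (2*\<alpha>*\<epsilon> + \<delta>*\<epsilon>^q)*f) - \<epsilon>*(2*a + (2*\<alpha> + \<delta>)*f)"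
    by (simp add: algebra_simps)
  hence "\<delta>*f*(\<epsilon>^q - \<epsilon>) = 0" using H1 He by simp
  hence "\<delta> = 0" using f0 eps by simp
  thus ?thesis by (simp add: \<delta>_def)
qed

lemma vshift_identity:
  "a*x0^2 + b*(y0+v)^2 + c + d*x0*(y0+v) + e*x0 + f*(y0+v)
   = (a*x0^2 + b*y0^2 + c + d*x0*y0 + e*x0 + f*y0) + v*((2*b*y0 + d*x0 + f) + b*v)"
  by (simp add: algebra_simps power2_eq_square)

lemma K_xcoord:
  assumes b0: "b \<noteq> 0" and P: "Aff x0 y0 \<in> K"
  shows "(4*a*b - d^2)*x0 = d*f - 2*b*e"
proof -
  define m where "m = mU x0"
  define Phy where "Phy = 2*b*y0 + d*x0 + f"
  have t0: "(2*a*x0 + d*y0 + e) + m*Phy = 0" using tangent_K[OF P] by (simp add: m_def Phy_def)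
  have Phy0: "Phy \<noteq> 0"
  proof
    assume "Phy = 0"
    hence "2*a*x0 + d*y0 + e = 0" using t0 by simp
    thus False using nonsingular[OF P] \<open>Phy = 0\<close> by (simp add: Phy_def)
  qed
  define v where "v = - Phy / b"
  have v0: "v \<noteq> 0" using Phy0 b0 by (simp add: v_def)
  have "Phy + b*v = 0" using b0 by (simp add: v_def)
  moreover have "a*x0^2 + b*y0^2 + c + d*x0*y0 + e*x0 + f*y0 = 0" using P by (simp add: conic_Aff)
  ultimately have "Aff x0 (y0+v) \<in> K" unfolding conic_Aff vshift_identity Phy_def by simp
  from tangent_K[OF this] have t1: "(2*a*x0 + d*(y0+v) + e) + m*(2*b*(y0+v) + d*x0 + f) = 0"
    by (simp add: m_def)
  have "v*(d + 2*b*m) = ((2*a*x0 + d*(y0+v) + e) + m*(2*b*(y0+v) + d*x0 + f)) - ((2*a*x0 + d*y0 + e) + m*Phy)"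
    by (simp add: Phy_def algebra_simps)
  hence "v*(d + 2*b*m) = 0" using t0 t1 by simp
  hence dm: "d + 2*b*m = 0" using v0 by simp
  have "(4*a*b - d^2)*x0 - (d*f - 2*b*e) = 2*b*((2*a*x0 + d*y0 + e) + m*Phy) - (d + 2*b*m)*Phy"
    by (simp add: Phy_def algebra_simps power2_eq_square)
  hence "(4*a*b - d^2)*x0 - (d*f - 2*b*e) = 0" using t0 dm by simp
  thus ?thesis by simp
qed

lemma K_exists:
  assumes b0: "b \<noteq> 0"
  shows "\<exists>x y. Aff x y \<in> K"
proof -
  have two: "(2::'a) \<noteq> 0" by (rule two_ne0)
  define A where "A = d^2 - 4*a*b"
  have A0: "A \<noteq> 0"
  proof
    assume "A = 0"
    define m where "m = -d/(2*b)"
    have bm: "2*b*m = -d" using b0 two by (simp add: m_def)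
    have "4*b*(a + b*m^2 + d*m) = 4*a*b + (2*b*m)^2 + 2*d*(2*b*m)" by (simp add: algebra_simps power2_eq_square)
    also have "\<dots> = -A" unfolding bm by (simp add: A_def algebra_simps power2_eq_square)
    finally have "4*b*(a + b*m^2 + d*m) = -A" .
    hence "a + b*m^2 + d*m = 0" using \<open>A = 0\<close> b0 four_ne0 by simp
    thus False using Dir_notK by blast
  qed
  define B where "B = 2*d*f - 4*b*e"
  define C0 where "C0 = f^2 - 4*b*c"
  define D where "D = B^2 - 4*A*C0"
  have "4*A \<noteq> 0" using A0 four_ne0 by simp
  then obtain w s where ws: "w^2 = D + (4*A)*s^2" using exists_rep by blast
  define x where "x = (w - B)/(2*A)"
  have wx: "2*A*x + B = w" using A0 two by (simp add: x_def field_simps)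
  have "4*A*(A*x^2 + B*x + C0) = (2*A*x + B)^2 - D" by (simp add: D_def algebra_simps power2_eq_square)
  also have "\<dots> = 4*A*s^2" using ws wx by simp
  finally have disc: "A*x^2 + B*x + C0 = s^2" using \<open>4*A \<noteq> 0\<close> by simp
  define y where "y = (s - (d*x + f))/(2*b)"
  have ys: "2*b*y + (d*x + f) = s" using b0 two by (simp add: y_def field_simps)
  have "4*b*(a*x^2 + b*y^2 + c + d*x*y + e*x + f*y) = (2*b*y + (d*x + f))^2 - (A*x^2 + B*x + C0)"
    by (simp add: A_def B_def C0_def algebra_simps power2_eq_square)
  also have "\<dots> = 0" using ys disc by simp
  finally have "a*x^2 + b*y^2 + c + d*x*y + e*x + f*y = 0" using b0 four_ne0 by simp
  thus ?thesis unfolding conic_Aff by blast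
qed

lemma case_bne0:
  assumes b0: "b \<noteq> 0"
  shows False
proof -
  obtain x0 y0 where P: "Aff x0 y0 \<in> K" using K_exists[OF b0] by blast
  obtain u y1 where u: "u \<noteq> 0" "Aff (x0+u) y1 \<in> K"
  proof (cases "2*a*x0 + d*y0 + e = 0")
    case False
    then obtain u where "u \<noteq> 0" "Aff (x0+u) (y0+0*u) \<in> K" using second_point[OF P, of 0] by auto
    thus thesis using that by auto
  next
    case True
    hence "2*b*y0 + d*x0 + f \<noteq> 0" using nonsingular[OF P] by auto
    then obtain u where "u \<noteq> 0" "Aff (x0+u) (y0+1*u) \<in> K" using second_point[OF P, of 1] True by auto
    thus thesis using that by auto
  qed
  have A: "4*a*b - d^2 \<noteq> 0"
  proof
    assume A0: "4*a*b - d^2 = 0"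
    have two: "(2::'a) \<noteq> 0" by (rule two_ne0)
    define m where "m = -d/(2*b)"
    have bm: "2*b*m = -d" using b0 two by (simp add: m_def)
    have "4*b*(a + b*m^2 + d*m) = 4*a*b + (2*b*m)^2 + 2*d*(2*b*m)" by (simp add: algebra_simps power2_eq_square)
    also have "\<dots> = 4*a*b - d^2" unfolding bm by (simp add: algebra_simps power2_eq_square)
    finally have "4*b*(a + b*m^2 + d*m) = 4*a*b - d^2" .
    hence "a + b*m^2 + d*m = 0" using A0 b0 four_ne0 by simp
    thus False using Dir_notK by blast
  qed
  have "(4*a*b - d^2)*x0 = (4*a*b - d^2)*(x0+u)" using K_xcoord[OF b0 P] K_xcoord[OF b0 u(2)] by simp
  hence "x0 = x0 + u" using A by simp
  thus False using u by simp
qed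

theorem beta_F: "\<beta>^q = \<beta>"
  using case_b0 case_bne0 by blast

end

definition aline :: "'a::field \<Rightarrow> 'a \<Rightarrow> 'a \<Rightarrow> ('a \<times> 'a) set" where
  "aline a b c = {(x, y). a*x + b*y + c = 0}"

definition isaline :: "('a::field \<times> 'a) set \<Rightarrow> bool" where
  "isaline L \<longleftrightarrow> (\<exists>a b c. (a, b) \<noteq> (0, 0) \<and> L = aline a b c)"

lemma aline_mem [simp]: "(x, y) \<in> aline a b c \<longleftrightarrow> a*x + b*y + c = 0"
  by (simp add: aline_def)

lemma isalineI: "(a, b) \<noteq> (0, 0) \<Longrightarrow> isaline (aline a b c)"
  by (auto simp: isaline_def)

lemma aline_pline: "aline a b c = {(x, y). Aff x y \<in> pline a b c}"
  by (auto simp: aline_def)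

lemma aline_unique:
  assumes "isaline L1" "isaline L2" "P \<noteq> R" "P \<in> L1" "R \<in> L1" "P \<in> L2" "R \<in> L2"
  shows "L1 = L2"
proof -
  obtain a b c where 1: "(a,b) \<noteq> (0,0)" "L1 = aline a b c" using assms(1) by (auto simp: isaline_def)
  obtain a' b' c' where 2: "(a',b') \<noteq> (0,0)" "L2 = aline a' b' c'" using assms(2) by (auto simp: isaline_def)
  obtain p1 p2 where P: "P = (p1, p2)" by (cases P)
  obtain r1 r2 where R: "R = (r1, r2)" by (cases R)
  have "pline a b c = pline a' b' c'"
    apply (rule line_unique[of _ _ "Aff p1 p2" "Aff r1 r2"])
    using 1 2 assms P R by (auto intro!: pline_lines)
  thus ?thesis using 1 2 by (simp add: aline_pline)
qed

lemma aline_scale: "l \<noteq> 0 \<Longrightarrow> aline (l*a) (l*b) (l*c) = aline a b c"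
  by (simp add: aline_pline pline_scale)

lemma prop2:
  fixes a b a' b' :: "'a::field"
  assumes "(a, b) \<noteq> (0, 0)" "a*b' = a'*b"
  shows "\<exists>l. a' = l*a \<and> b' = l*b"
proof (cases "a = 0")
  case True
  hence "b \<noteq> 0" using assms by auto
  thus ?thesis using assms True by (intro exI[of _ "b'/b"]) (auto simp: field_simps)
next
  case False
  thus ?thesis using assms by (intro exI[of _ "a'/a"]) (auto simp: field_simps)
qed

lemma aline_disjoint_par:
  fixes a b c a' b' c' :: "'a::field"
  assumes "aline a b c \<inter> aline a' b' c' = {}"
  shows "a*b' = a'*b"
proof (rule ccontr)
  assume ne: "a*b' \<noteq> a'*b"
  define D where "D = a*b' - a'*b"
  have D0: "D \<noteq> 0" using ne by (simp add: D_def)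
  define x where "x = (b*c' - b'*c)/D"
  define y where "y = (a'*c - a*c')/D"
  have n1: "a*(b*c' - b'*c) + b*(a'*c - a*c') + c*D = 0" by (simp add: D_def algebra_simps)
  have n2: "a'*(b*c' - b'*c) + b'*(a'*c - a*c') + c'*D = 0" by (simp add: D_def algebra_simps)
  have "a*x + b*y + c = (a*(b*c' - b'*c) + b*(a'*c - a*c') + c*D)/D"
    using D0 by (simp add: x_def y_def field_simps)
  hence "a*x + b*y + c = 0" using n1 by simp
  moreover have "a'*x + b'*y + c' = (a'*(b*c' - b'*c) + b'*(a'*c - a*c') + c'*D)/D"
    using D0 by (simp add: x_def y_def field_simps)
  hence "a'*x + b'*y + c' = 0" using n2 by simp
  ultimately have "(x, y) \<in> aline a b c \<inter> aline a' b' c'" by simp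
  thus False using assms by blast
qed

lemma par_through:
  fixes a b c :: "'a::field"
  assumes L: "isaline L" and ab: "(a, b) \<noteq> (0, 0)"
    and par: "L \<inter> aline a b c = {} \<or> L = aline a b c" and uv: "(u, v) \<in> L"
  shows "L = aline a b (-(a*u + b*v))"
proof -
  obtain a' b' c' where L': "(a',b') \<noteq> (0,0)" "L = aline a' b' c'" using L by (auto simp: isaline_def)
  show ?thesis
  proof (cases "L = aline a b c")
    case True
    have "a*u + b*v + c = 0" using uv True by simp
    hence "c = -(a*u + b*v)" by (metis add.commute eq_neg_iff_add_eq_0)
    thus ?thesis using True by simp
  next
    case False
    hence "a'*b = a*b'" using par L' aline_disjoint_par by (metis inf_commute)
    then obtain l where l: "a' = l*a" "b' = l*b" using prop2[OF ab] by (metis mult.commute)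
    have l0: "l \<noteq> 0" using L' l by auto
    have "a'*u + b'*v + c' = 0" using uv L' by simp
    hence "c' = -(a'*u + b'*v)" by (metis add.commute eq_neg_iff_add_eq_0)
    hence "c' = l * (-(a*u + b*v))" using l by (simp add: algebra_simps)
    thus ?thesis using L' l aline_scale[OF l0] by simp
  qed
qed

locale affcoll =
  fixes G :: "'a::{field,finite} \<times> 'a \<Rightarrow> 'a \<times> 'a"
  assumes bijG: "bij G" and linesG: "\<And>L. isaline L \<Longrightarrow> isaline (G ` L)"
begin

lemma injG: "inj G" using bijG bij_is_inj by blast

lemma image_line_eq:
  assumes "isaline L" "isaline L'" "P \<noteq> R" "P \<in> L" "R \<in> L" "G P \<in> L'" "G R \<in> L'"
  shows "G ` L = L'"
  apply (rule aline_unique[of _ _ "G P" "G R"])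
  using assms linesG injG by (auto simp: inj_eq)

lemma par_img:
  assumes L: "isaline L" and ab: "(a, b) \<noteq> (0, 0)"
    and par: "L \<inter> aline a b c = {} \<or> L = aline a b c"
    and img: "G ` aline a b c = aline a' b' c'" and ab': "(a', b') \<noteq> (0, 0)"
    and P: "P \<in> L" and GP: "G P = (u, v)"
  shows "G ` L = aline a' b' (-(a'*u + b'*v))"
proof -
  have "G ` L \<inter> G ` aline a b c = {} \<or> G ` L = G ` aline a b c"
    using par injG by (metis image_Int image_empty)
  hence "G ` L \<inter> aline a' b' c' = {} \<or> G ` L = aline a' b' c'" using img by simp
  moreover have "(u, v) \<in> G ` L" using P GP by (metis imageI)
  ultimately show ?thesis using par_through[OF linesG[OF L] ab'] by blast
qed

end

locale affcoll0 = affcoll +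
  assumes G00: "G (0,0) = (0,0)" and G10: "G (1,0) = (1,0)" and G01: "G (0,1) = (0,1)"
begin

definition \<tau> :: "'a \<Rightarrow> 'a" where "\<tau> x = fst (G (x, 0))"
definition \<tau>' :: "'a \<Rightarrow> 'a" where "\<tau>' y = snd (G (0, y))"

lemma GX: "G ` aline 0 1 0 = aline 0 1 0"
  by (rule image_line_eq[of _ _ "(0,0)" "(1,0)"]) (auto intro: isalineI simp: G00 G10)

lemma GY: "G ` aline 1 0 0 = aline 1 0 0"
  by (rule image_line_eq[of _ _ "(0,0)" "(0,1)"]) (auto intro: isalineI simp: G00 G01)

lemma Gx0: "G (x, 0) = (\<tau> x, 0)"
proof -
  have "G (x, 0) \<in> aline 0 1 0" using GX by (metis aline_mem imageI mult_zero_left add_0 mult_zero_right)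
  thus ?thesis by (cases "G (x,0)") (simp add: \<tau>_def)
qed

lemma G0y: "G (0, y) = (0, \<tau>' y)"
proof -
  have "G (0, y) \<in> aline 1 0 0" using GY by (metis aline_mem imageI mult_zero_left add_0 mult_zero_right)
  thus ?thesis by (cases "G (0,y)") (simp add: \<tau>'_def)
qed

lemma tau0: "\<tau> 0 = 0" using G00 Gx0[of 0] by simp
lemma tau1: "\<tau> 1 = 1" using G10 Gx0[of 1] by simp
lemma tau'1: "\<tau>' 1 = 1" using G01 G0y[of 1] by simp

lemma Gvert: "G ` aline 1 0 (-k) = aline 1 0 (-(\<tau> k))"
proof -
  have "aline 1 0 (-k) \<inter> aline 1 0 0 = {} \<or> aline 1 0 (-k) = aline (1::'a) 0 0"
    by (cases "k = 0") auto
  from par_img[OF isalineI _ this GY _ _ Gx0[of k]] show ?thesis by simp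
qed

lemma Ghor: "G ` aline 0 1 (-k) = aline 0 1 (-(\<tau>' k))"
proof -
  have "aline 0 1 (-k) \<inter> aline 0 1 0 = {} \<or> aline 0 1 (-k) = aline (0::'a) 1 0"
    by (cases "k = 0") auto
  from par_img[OF isalineI _ this GX _ _ G0y[of k]] show ?thesis by simp
qed

lemma Gxy': "G (x, y) = (\<tau> x, \<tau>' y)"
proof -
  have "G (x, y) \<in> G ` aline 1 0 (-x)" "G (x, y) \<in> G ` aline 0 1 (-y)" by auto
  hence "G (x, y) \<in> aline 1 0 (-(\<tau> x))" "G (x, y) \<in> aline 0 1 (-(\<tau>' y))"
    using Gvert Ghor by auto
  thus ?thesis by (cases "G (x,y)") simp
qed

lemma GD1: "G ` aline 1 1 (-1) = aline 1 1 (-1)"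
  by (rule image_line_eq[of _ _ "(1,0)" "(0,1)"]) (auto intro: isalineI simp: G10 G01)

lemma tau'_eq: "\<tau>' x = \<tau> x"
proof -
  have "aline 1 1 (-x) \<inter> aline 1 1 (-1) = {} \<or> aline 1 1 (-x) = aline (1::'a) 1 (-1)"
    by (cases "x = 1") auto
  from par_img[OF isalineI _ this GD1 _ _ Gx0[of x]]
  have "G ` aline 1 1 (-x) = aline 1 1 (-(\<tau> x))" by simp
  moreover have "G (0, x) \<in> G ` aline 1 1 (-x)" by auto
  ultimately show ?thesis using G0y by simp
qed

lemma Gxy: "G (x, y) = (\<tau> x, \<tau> y)"
  using Gxy' tau'_eq by simp

lemma tau_add: "\<tau> (x + y) = \<tau> x + \<tau> y"
proof (cases "y = 0")
  case True thus ?thesis by (simp add: tau0)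
next
  case False
  have L1: "G ` aline 1 y (-y) = aline 1 (\<tau> y) (-(\<tau> y))"
    by (rule image_line_eq[of _ _ "(0,1)" "(y,0)"]) (auto intro: isalineI simp: Gxy tau1 tau0)
  have "aline 1 y (-(x+y)) \<inter> aline 1 y (-y) = {} \<or> aline 1 y (-(x+y)) = aline 1 y (-y)"
    by (cases "x = 0") auto
  from par_img[OF isalineI _ this L1 _ _ Gxy[of x 1]]
  have "G ` aline 1 y (-(x+y)) = aline 1 (\<tau> y) (-(\<tau> x + \<tau> y))" by (simp add: tau1)
  moreover have "G (x+y, 0) \<in> G ` aline 1 y (-(x+y))" by auto
  ultimately show ?thesis using Gxy tau0 by (simp add: add_eq_0_iff2)
qed

lemma tau_mult: "\<tau> (x * y) = \<tau> x * \<tau> y"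
proof (cases "x = 0")
  case True thus ?thesis by (simp add: tau0)
next
  case False
  have L1: "G ` aline 1 x (-x) = aline 1 (\<tau> x) (-(\<tau> x))"
    by (rule image_line_eq[of _ _ "(0,1)" "(x,0)"]) (auto intro: isalineI simp: Gxy tau1 tau0)
  have "aline 1 x (-(x*y)) \<inter> aline 1 x (-x) = {} \<or> aline 1 x (-(x*y)) = aline 1 x (-x)"
    using False by (cases "y = 1") auto
  from par_img[OF isalineI _ this L1 _ _ Gxy[of 0 y]]
  have "G ` aline 1 x (-(x*y)) = aline 1 (\<tau> x) (-(\<tau> x * \<tau> y))" by (simp add: tau0)
  moreover have "G (x*y, 0) \<in> G ` aline 1 x (-(x*y))" by auto
  ultimately show ?thesis using Gxy tau0 by (simp add: add_eq_0_iff2)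
qed

lemma tau_inj: "inj \<tau>"
  using injG Gx0 by (metis (no_types, lifting) injI inj_eq prod.inject)

lemma tau_bij: "bij \<tau>"
  using tau_inj by (simp add: bij_def finite_UNIV_inj_surj)

end

lemma not_linf_Aff:
  assumes "P \<in> points" "P \<notin> line_inf" obtains u v where "P = Aff u v"
  using assms by (cases rule: points_cases) auto

lemma inf_point:
  fixes u1 v1 w1 w2 :: "'a::field"
  assumes l: "l \<in> lines" and A1: "Aff u1 v1 \<in> l" and A2: "Aff (u1+w1) (v1+w2) \<in> l"
    and w: "(w1, w2) \<noteq> (0, 0)" and R: "R \<in> l" "R \<in> line_inf"
  shows "R = pt w1 w2 0"
proof -
  obtain a b c where lp: "l = pline a b c" "(a,b,c) \<noteq> (0,0,0)" using l by (auto simp: lines_def)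
  have e1: "a*u1 + b*v1 + c = 0" using A1 lp by simp
  have e2: "a*(u1+w1) + b*(v1+w2) + c = 0" using A2 lp by simp
  have "a*w1 + b*w2 = (a*(u1+w1) + b*(v1+w2) + c) - (a*u1 + b*v1 + c)" by (simp add: algebra_simps)
  hence aw: "a*w1 + b*w2 = 0" using e1 e2 by simp
  have ab: "(a, b) \<noteq> (0, 0)" using lp e1 by auto
  have "R \<in> points" using R lp pline_subset by auto
  then obtain x y z where Rv: "R = pt x y z" "(x,y,z) \<noteq> (0,0,0)" using points_vec by metis
  have z: "z = 0" using R(2) Rv by (simp add: line_inf_def mem_pline_pt)
  have ax: "a*x + b*y = 0" using R(1) Rv lp z by (simp add: mem_pline_pt)
  have xy: "(x, y) \<noteq> (0, 0)" using Rv z by auto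
  have "\<exists>k. w1 = k*x \<and> w2 = k*y"
  proof -
    have i1: "a*(x*w2 - w1*y) = w2*(a*x + b*y) - y*(a*w1 + b*w2)" by (simp add: algebra_simps)
    have i2: "b*(x*w2 - w1*y) = x*(a*w1 + b*w2) - w1*(a*x + b*y)" by (simp add: algebra_simps)
    have j1: "a*(x*w2 - w1*y) = 0" using i1 ax aw by simp
    have j2: "b*(x*w2 - w1*y) = 0" using i2 ax aw by simp
    have "x*w2 - w1*y = 0"
    proof (cases "a = 0")
      case True hence "b \<noteq> 0" using ab by simp
      thus ?thesis using j2 by simp
    next
      case False thus ?thesis using j1 by simp
    qed
    hence "x*w2 = w1*y" by simp
    thus ?thesis using prop2[OF xy] by (metis mult.commute)
  qed
  then obtain k where k: "w1 = k*x" "w2 = k*y" by blast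
  have k0: "k \<noteq> 0" using k w by auto
  have "pt w1 w2 0 = pt (k*x) (k*y) (k*z)" using k z by simp
  also have "\<dots> = pt x y z" by (rule pt_scale[OF k0])
  finally show ?thesis using Rv by simp
qed

locale pcoll =
  fixes \<sigma> :: "'a::{field,finite} ppoint \<Rightarrow> 'a ppoint"
  assumes coll: "collineation \<sigma>" and fix_inf: "\<sigma> ` line_inf = line_inf"
begin

lemma inj\<sigma>: "inj_on \<sigma> points" using coll by (rule coll_inj)

lemma \<sigma>_points: "P \<in> points \<Longrightarrow> \<sigma> P \<in> points"
  using coll by (auto simp: collineation_def bij_betw_def)

lemma linf_sub: "line_inf \<subseteq> points" using linf_lines lines_subset by blast

lemma \<sigma>_inf_iff: "P \<in> points \<Longrightarrow> \<sigma> P \<in> line_inf \<longleftrightarrow> P \<in> line_inf"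
proof
  assume "P \<in> points" "\<sigma> P \<in> line_inf"
  then obtain R where "R \<in> line_inf" "\<sigma> R = \<sigma> P" using fix_inf by (metis imageE)
  thus "P \<in> line_inf" using inj\<sigma> \<open>P \<in> points\<close> linf_sub by (metis inj_onD subsetD)
next
  assume "P \<in> line_inf" thus "\<sigma> P \<in> line_inf" using fix_inf by blast
qed

lemma \<sigma>_Aff_ex: "\<exists>u v. \<sigma> (Aff x y) = Aff u v"
proof -
  have "\<sigma> (Aff x y) \<in> points" "\<sigma> (Aff x y) \<notin> line_inf" using \<sigma>_points \<sigma>_inf_iff by auto
  thus ?thesis using not_linf_Aff by metis
qed

definition F :: "'a \<times> 'a \<Rightarrow> 'a \<times> 'a" where
  "F p = (SOME w. \<sigma> (Aff (fst p) (snd p)) = Aff (fst w) (snd w))"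

lemma F: "\<sigma> (Aff x y) = Aff (fst (F (x,y))) (snd (F (x,y)))"
proof -
  obtain u v where "\<sigma> (Aff x y) = Aff u v" using \<sigma>_Aff_ex by blast
  hence "\<exists>w. \<sigma> (Aff x y) = Aff (fst w) (snd w)" by (intro exI[of _ "(u,v)"]) simp
  hence "\<sigma> (Aff x y) = Aff (fst (SOME w. \<sigma> (Aff x y) = Aff (fst w) (snd w))) (snd (SOME w. \<sigma> (Aff x y) = Aff (fst w) (snd w)))"
    by (rule someI_ex)
  thus ?thesis by (simp add: F_def)
qed

lemma F_inj: "inj F"
proof
  fix p p' assume "F p = F p'"
  hence "\<sigma> (Aff (fst p) (snd p)) = \<sigma> (Aff (fst p') (snd p'))" using F by (metis prod.collapse)
  hence "Aff (fst p) (snd p) = Aff (fst p') (snd p')" using inj\<sigma> by (auto dest: inj_onD)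
  thus "p = p'" by (simp add: prod_eq_iff)
qed

lemma F_bij: "bij F"
  using F_inj by (simp add: bij_def finite_UNIV_inj_surj)

lemma F_lines: "isaline L \<Longrightarrow> isaline (F ` L)"
proof -
  assume "isaline L"
  then obtain a b c where abc: "(a,b) \<noteq> (0,0)" "L = aline a b c" by (auto simp: isaline_def)
  let ?l = "pline a b c"
  have l: "?l \<in> lines" using abc by (auto intro: pline_lines)
  have sl: "\<sigma> ` ?l \<in> lines" using coll l unfolding collineation_def by blast
  obtain x0 y0 where xy0: "Aff x0 y0 \<in> ?l"
  proof (cases "b = 0")
    case True
    hence "a \<noteq> 0" using abc by simp
    thus thesis using that[of "-c/a" 0] True by simp
  next
    case False
    thus thesis using that[of 0 "-c/b"] by simp
  qed
  have sl_ne: "\<sigma> ` ?l \<noteq> line_inf"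
  proof
    assume "\<sigma> ` ?l = line_inf"
    hence "\<sigma> (Aff x0 y0) \<in> line_inf" using xy0 by blast
    thus False using \<sigma>_inf_iff by simp
  qed
  obtain a' b' c' where l': "\<sigma> ` ?l = pline a' b' c'" "(a', b') \<noteq> (0,0)"
    using sl sl_ne by (cases rule: lines_cases) auto
  have "F ` L = aline a' b' c'"
  proof (intro equalityI subsetI)
    fix w assume "w \<in> F ` L"
    then obtain x y where xy: "(x,y) \<in> L" "w = F (x,y)" by auto
    hence "Aff x y \<in> ?l" using abc by simp
    hence "\<sigma> (Aff x y) \<in> pline a' b' c'" using l' by blast
    moreover obtain u v where uv: "F (x,y) = (u,v)" by (cases "F (x,y)")
    ultimately have "Aff u v \<in> pline a' b' c'" using F by (metis fst_conv snd_conv)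
    thus "w \<in> aline a' b' c'" using xy uv by simp
  next
    fix w assume "w \<in> aline a' b' c'"
    then obtain u v where w: "w = (u,v)" "Aff u v \<in> \<sigma> ` ?l" using l' by (cases w) simp
    then obtain P where P: "P \<in> ?l" "\<sigma> P = Aff u v" by auto
    have Pp: "P \<in> points" using P(1) pline_subset by blast
    have "P \<notin> line_inf" using \<sigma>_inf_iff[OF Pp] P by simp
    then obtain x y where Pxy: "P = Aff x y" using Pp not_linf_Aff by metis
    have "Aff (fst (F (x,y))) (snd (F (x,y))) = Aff u v" using P Pxy F by simp
    hence "F (x,y) = w" using w by (simp add: prod_eq_iff)
    moreover have "(x,y) \<in> L" using P Pxy abc by simp
    ultimately show "w \<in> F ` L" by blast
  qed
  thus "isaline (F ` L)" using l' by (simp add: isalineI)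
qed


definition "o1 = fst (F (0,0))"
definition "o2 = snd (F (0,0))"
definition "pp = fst (F (1,0)) - o1"
definition "rr = snd (F (1,0)) - o2"
definition "ss = fst (F (0,1)) - o1"
definition "tt = snd (F (0,1)) - o2"
definition "\<Delta> = pp*tt - ss*rr"

lemma F00: "F (0,0) = (o1, o2)" by (simp add: o1_def o2_def)
lemma F10: "F (1,0) = (o1 + pp, o2 + rr)" by (simp add: o1_def o2_def pp_def rr_def)
lemma F01: "F (0,1) = (o1 + ss, o2 + tt)" by (simp add: o1_def o2_def ss_def tt_def)

lemma \<Delta>_ne0: "\<Delta> \<noteq> 0"
proof
  assume D: "\<Delta> = 0"
  have neq: "F (0,0) \<noteq> F (1,0)"
  proof
    assume "F (0,0) = F (1,0)"
    hence "((0::'a),(0::'a)) = (1,0)" by (rule injD[OF F_inj])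
    thus False by simp
  qed
  have pr: "(pp, rr) \<noteq> (0,0)"
  proof
    assume "(pp, rr) = (0,0)"
    hence "F (1,0) = F (0,0)" unfolding F00 F10 by simp
    thus False using neq by simp
  qed
  let ?Lo = "aline rr (-pp) (pp*o2 - rr*o1)"
  have Lo: "isaline ?Lo" using pr by (intro isalineI) auto
  have m1: "F (0,0) \<in> ?Lo" unfolding F00 aline_mem by (simp add: algebra_simps)
  have m2: "F (1,0) \<in> ?Lo" unfolding F10 aline_mem by (simp add: algebra_simps)
  have XL: "F ` aline 0 1 0 = ?Lo"
  proof (rule aline_unique[OF _ Lo neq])
    show "isaline (F ` aline 0 1 0)" by (rule F_lines) (simp add: isalineI)
    show "F (0,0) \<in> F ` aline 0 1 0" by (rule imageI) simp
    show "F (1,0) \<in> F ` aline 0 1 0" by (rule imageI) simp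
  qed (rule m1, rule m2)
  have "rr*(o1+ss) + (-pp)*(o2+tt) + (pp*o2 - rr*o1) = -\<Delta>" by (simp add: \<Delta>_def algebra_simps)
  hence "rr*(o1+ss) + (-pp)*(o2+tt) + (pp*o2 - rr*o1) = 0" using D by simp
  hence "F (0,1) \<in> ?Lo" unfolding F01 aline_mem .
  hence "F (0,1) \<in> F ` aline 0 1 0" using XL by simp
  then obtain z where z: "z \<in> aline 0 1 0" "F z = F (0,1)" by auto
  hence "z = (0,1)" using F_inj by (simp add: inj_eq)
  thus False using z by simp
qed

definition A :: "'a \<times> 'a \<Rightarrow> 'a \<times> 'a" where
  "A w = ((tt*(fst w - o1) - ss*(snd w - o2))/\<Delta>, (pp*(snd w - o2) - rr*(fst w - o1))/\<Delta>)"
definition B :: "'a \<times> 'a \<Rightarrow> 'a \<times> 'a" where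
  "B v = (o1 + pp*fst v + ss*snd v, o2 + rr*fst v + tt*snd v)"

lemma AB: "A (B v) = v"
proof -
  obtain x y where v: "v = (x,y)" by (cases v)
  have n1: "tt*(pp*x + ss*y) - ss*(rr*x + tt*y) = x*\<Delta>" by (simp add: \<Delta>_def algebra_simps)
  have n2: "pp*(rr*x + tt*y) - rr*(pp*x + ss*y) = y*\<Delta>" by (simp add: \<Delta>_def algebra_simps)
  show ?thesis unfolding v A_def B_def fst_conv snd_conv
    using n1 n2 \<Delta>_ne0 by simp
qed

lemma BA: "B (A w) = w"
proof -
  obtain x y where w: "w = (x,y)" by (cases w)
  define u where "u = x - o1"
  define v where "v = y - o2"
  have n1: "pp*((tt*u - ss*v)/\<Delta>) + ss*((pp*v - rr*u)/\<Delta>) = (pp*(tt*u - ss*v) + ss*(pp*v - rr*u))/\<Delta>"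
    by (simp add: add_divide_distrib)
  have n1b: "pp*(tt*u - ss*v) + ss*(pp*v - rr*u) = u*\<Delta>" by (simp add: \<Delta>_def algebra_simps)
  have n2: "rr*((tt*u - ss*v)/\<Delta>) + tt*((pp*v - rr*u)/\<Delta>) = (rr*(tt*u - ss*v) + tt*(pp*v - rr*u))/\<Delta>"
    by (simp add: add_divide_distrib)
  have n2b: "rr*(tt*u - ss*v) + tt*(pp*v - rr*u) = v*\<Delta>" by (simp add: \<Delta>_def algebra_simps)
  have "B (A w) = (o1 + (pp*((tt*u - ss*v)/\<Delta>) + ss*((pp*v - rr*u)/\<Delta>)),
                   o2 + (rr*((tt*u - ss*v)/\<Delta>) + tt*((pp*v - rr*u)/\<Delta>)))"
    unfolding w A_def B_def u_def v_def by (simp add: add.assoc)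
  also have "\<dots> = (o1 + u, o2 + v)" unfolding n1 n2 n1b n2b using \<Delta>_ne0 by simp
  finally show ?thesis by (simp add: w u_def v_def)
qed

lemma A_aline:
  assumes ab: "(a, b) \<noteq> (0, 0)"
  shows "isaline (A ` aline a b c)"
proof -
  have eq: "A ` aline a b c = aline (a*pp + b*rr) (a*ss + b*tt) (a*o1 + b*o2 + c)"
  proof (intro equalityI subsetI)
    fix w assume "w \<in> A ` aline a b c"
    then obtain w0 where w0: "w0 \<in> aline a b c" "w = A w0" by auto
    have "B w = w0" using w0 BA by simp
    thus "w \<in> aline (a*pp + b*rr) (a*ss + b*tt) (a*o1 + b*o2 + c)" using w0(1)
      by (cases w; cases w0) (simp add: B_def algebra_simps)
  next
    fix w assume h: "w \<in> aline (a*pp + b*rr) (a*ss + b*tt) (a*o1 + b*o2 + c)"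
    have "B w \<in> aline a b c" using h by (cases w) (simp add: B_def algebra_simps)
    thus "w \<in> A ` aline a b c" using AB by (metis imageI)
  qed
  have "(a*pp + b*rr, a*ss + b*tt) \<noteq> (0, 0)"
  proof
    assume h: "(a*pp + b*rr, a*ss + b*tt) = (0, 0)"
    have "a*\<Delta> = tt*(a*pp + b*rr) - rr*(a*ss + b*tt)" by (simp add: \<Delta>_def algebra_simps)
    hence "a = 0" using h \<Delta>_ne0 by simp
    moreover have "b*\<Delta> = pp*(a*ss + b*tt) - ss*(a*pp + b*rr)" by (simp add: \<Delta>_def algebra_simps)
    hence "b = 0" using h \<Delta>_ne0 by simp
    ultimately show False using ab by simp
  qed
  thus ?thesis using eq by (simp add: isalineI)
qed

definition G :: "'a \<times> 'a \<Rightarrow> 'a \<times> 'a" where "G v = A (F v)"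

lemma G_affcoll0: "affcoll0 G"
proof
  show "bij G"
  proof -
    have "inj A" by (metis AB BA injI)
    hence "inj G" using F_inj unfolding G_def by (metis inj_def)
    thus ?thesis by (simp add: bij_def finite_UNIV_inj_surj)
  qed
  show "isaline (G ` L)" if "isaline L" for L
  proof -
    have "isaline (F ` L)" using that by (rule F_lines)
    then obtain a b c where "(a,b) \<noteq> (0,0)" "F ` L = aline a b c" by (auto simp: isaline_def)
    hence "isaline (A ` F ` L)" using A_aline by simp
    moreover have "G ` L = A ` F ` L" by (auto simp: G_def)
    ultimately show ?thesis by simp
  qed
  show "G (0,0) = (0,0)" using \<Delta>_ne0 by (simp add: G_def F00 A_def)
  show "G (1,0) = (1,0)" using \<Delta>_ne0 by (simp add: G_def F10 A_def \<Delta>_def algebra_simps)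
  show "G (0,1) = (0,1)" using \<Delta>_ne0 by (simp add: G_def F01 A_def \<Delta>_def algebra_simps)
qed


definition tau :: "'a \<Rightarrow> 'a" where "tau = affcoll0.\<tau> G"

lemma tau_add: "tau (x + y) = tau x + tau y"
  unfolding tau_def by (rule affcoll0.tau_add[OF G_affcoll0])
lemma tau_mult: "tau (x * y) = tau x * tau y"
  unfolding tau_def by (rule affcoll0.tau_mult[OF G_affcoll0])
lemma tau0: "tau 0 = 0"
  unfolding tau_def by (rule affcoll0.tau0[OF G_affcoll0])
lemma tau1: "tau 1 = 1"
  unfolding tau_def by (rule affcoll0.tau1[OF G_affcoll0])
lemma tau_bij: "bij tau"
  unfolding tau_def by (rule affcoll0.tau_bij[OF G_affcoll0])
lemma Gform: "G (x, y) = (tau x, tau y)"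
  unfolding tau_def by (rule affcoll0.Gxy[OF G_affcoll0])

lemma tau_nz: "x \<noteq> 0 \<Longrightarrow> tau x \<noteq> 0"
  using tau_bij tau0 by (metis bij_def inj_eq)

lemma tau_div: "z \<noteq> 0 \<Longrightarrow> tau (x / z) = tau x / tau z"
proof -
  assume z: "z \<noteq> 0"
  have "tau x = tau (z * (x / z))" using z by simp
  also have "\<dots> = tau z * tau (x / z)" by (rule tau_mult)
  finally show ?thesis using tau_nz[OF z] by (simp add: field_simps)
qed

lemma tau_neg: "tau (- x) = - tau x"
proof -
  have "tau x + tau (-x) = 0" using tau_add[of x "-x"] tau0 by simp
  hence "- tau x = tau (-x)" by (simp only: neg_eq_iff_add_eq_0)
  thus ?thesis by simp
qed

lemma tau_diff: "tau (x - y) = tau x - tau y"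
  using tau_add[of x "-y"] tau_neg[of y] by simp

lemma tau_num: "tau (numeral n) = numeral n"
proof (induction n)
  case One show ?case using tau1 by simp
next
  case (Bit0 n) show ?case using tau_add[of "numeral n" "numeral n"] Bit0 by (simp add: numeral_Bit0)
next
  case (Bit1 n) show ?case using tau_add[of "numeral n" "numeral n"] tau_add[of "numeral n + numeral n" 1] Bit1 tau1
    by (simp add: numeral_Bit1)
qed

lemma tau_pow: "tau (x ^ n) = tau x ^ n"
  by (induction n) (simp_all add: tau1 tau_mult)

lemma FB: "F v = B (G v)"
  unfolding G_def by (simp add: BA)

lemma sAff: "\<sigma> (Aff x y) = Aff (o1 + pp*tau x + ss*tau y) (o2 + rr*tau x + tt*tau y)"
  using F[of x y] FB[of "(x,y)"] by (simp add: Gform B_def)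

lemma sDir: "\<sigma> (Dir m) = pt (pp + ss*tau m) (rr + tt*tau m) 0"
proof -
  let ?l = "pline m (-1) 0"
  have l: "?l \<in> lines" by (intro pline_lines) simp
  have sl: "\<sigma> ` ?l \<in> lines" using coll l unfolding collineation_def by blast
  have "Aff 0 0 \<in> ?l" "Aff 1 m \<in> ?l" "Dir m \<in> ?l" by simp_all
  hence "\<sigma> (Aff 0 0) \<in> \<sigma> ` ?l" "\<sigma> (Aff 1 m) \<in> \<sigma> ` ?l" "\<sigma> (Dir m) \<in> \<sigma> ` ?l" by auto
  hence m: "Aff o1 o2 \<in> \<sigma> ` ?l" "Aff (o1 + (pp + ss*tau m)) (o2 + (rr + tt*tau m)) \<in> \<sigma> ` ?l"
    "\<sigma> (Dir m) \<in> \<sigma> ` ?l"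
    using sAff[of 0 0] sAff[of 1 m] by (simp_all add: tau0 tau1 add.assoc)
  have w: "(pp + ss*tau m, rr + tt*tau m) \<noteq> (0, 0)"
  proof
    assume h: "(pp + ss*tau m, rr + tt*tau m) = (0, 0)"
    have "\<Delta> = tt*(pp + ss*tau m) - ss*(rr + tt*tau m)" by (simp add: \<Delta>_def algebra_simps)
    thus False using h \<Delta>_ne0 by simp
  qed
  have "\<sigma> (Dir m) \<in> line_inf" using \<sigma>_inf_iff by simp
  thus ?thesis using inf_point[OF sl m(1) m(2) w m(3)] by simp
qed

lemma sPinf: "\<sigma> Pinf = pt ss tt 0"
proof -
  let ?l = "pline 1 0 0"
  have l: "?l \<in> lines" by (intro pline_lines) simp
  have sl: "\<sigma> ` ?l \<in> lines" using coll l unfolding collineation_def by blast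
  have "Aff 0 0 \<in> ?l" "Aff 0 1 \<in> ?l" "Pinf \<in> ?l" by simp_all
  hence "\<sigma> (Aff 0 0) \<in> \<sigma> ` ?l" "\<sigma> (Aff 0 1) \<in> \<sigma> ` ?l" "\<sigma> Pinf \<in> \<sigma> ` ?l" by auto
  hence m: "Aff o1 o2 \<in> \<sigma> ` ?l" "Aff (o1 + ss) (o2 + tt) \<in> \<sigma> ` ?l" "\<sigma> Pinf \<in> \<sigma> ` ?l"
    using sAff[of 0 0] sAff[of 0 1] by (simp_all add: tau0 tau1)
  have w: "(ss, tt) \<noteq> (0, 0)" using \<Delta>_ne0 by (auto simp: \<Delta>_def)
  have "\<sigma> Pinf \<in> line_inf" using \<sigma>_inf_iff by simp
  thus ?thesis using inf_point[OF sl m(1) m(2) w m(3)] by simp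
qed

definition SX where "SX x y z = pp*tau x + ss*tau y + o1*tau z"
definition SY where "SY x y z = rr*tau x + tt*tau y + o2*tau z"

lemma sigma_pt:
  assumes nz: "(x,y,z) \<noteq> (0,0,0)"
  shows "\<sigma> (pt x y z) = pt (SX x y z) (SY x y z) (tau z)"
proof (cases "z = 0")
  case False
  have "pt x y z = Aff (x/z) (y/z)" using False by (subst pt_eq_iff[OF nz]) (auto intro!: exI[of _ "1/z"])
  hence "\<sigma> (pt x y z) = Aff (o1 + pp*tau (x/z) + ss*tau (y/z)) (o2 + rr*tau (x/z) + tt*tau (y/z))"
    by (simp add: sAff)
  also have "\<dots> = pt (tau z * (o1 + pp*tau (x/z) + ss*tau (y/z))) (tau z * (o2 + rr*tau (x/z) + tt*tau (y/z))) (tau z * 1)"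
    by (rule pt_scale[symmetric]) (rule tau_nz[OF False])
  also have "\<dots> = pt (SX x y z) (SY x y z) (tau z)"
  proof -
    have "tau z * (o1 + pp*tau (x/z) + ss*tau (y/z)) = SX x y z"
      using tau_nz[OF False] by (simp add: SX_def tau_div False field_simps)
    moreover have "tau z * (o2 + rr*tau (x/z) + tt*tau (y/z)) = SY x y z"
      using tau_nz[OF False] by (simp add: SY_def tau_div False field_simps)
    ultimately show ?thesis by simp
  qed
  finally show ?thesis .
next
  case z: True
  show ?thesis
  proof (cases "x = 0")
    case False
    have "pt x y z = Dir (y/x)" using False z by (subst pt_eq_iff[OF nz]) (auto intro!: exI[of _ "1/x"])
    hence "\<sigma> (pt x y z) = pt (pp + ss*tau (y/x)) (rr + tt*tau (y/x)) 0" by (simp add: sDir)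
    also have "\<dots> = pt (tau x * (pp + ss*tau (y/x))) (tau x * (rr + tt*tau (y/x))) (tau x * 0)"
      by (rule pt_scale[symmetric]) (rule tau_nz[OF False])
    also have "\<dots> = pt (SX x y z) (SY x y z) (tau z)"
    proof -
      have "tau x * (pp + ss*tau (y/x)) = SX x y z"
        using tau_nz[OF False] by (simp add: SX_def tau_div False field_simps z tau0)
      moreover have "tau x * (rr + tt*tau (y/x)) = SY x y z"
        using tau_nz[OF False] by (simp add: SY_def tau_div False field_simps z tau0)
      ultimately show ?thesis by (simp add: z tau0)
    qed
    finally show ?thesis .
  next
    case True
    hence y: "y \<noteq> 0" using nz z by auto
    have "pt x y z = Pinf" using True z y by (subst pt_eq_iff[OF nz]) (auto intro!: exI[of _ "1/y"])
    hence "\<sigma> (pt x y z) = pt ss tt 0" by (simp add: sPinf)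
    also have "\<dots> = pt (tau y * ss) (tau y * tt) (tau y * 0)"
      by (rule pt_scale[symmetric]) (rule tau_nz[OF y])
    also have "\<dots> = pt (SX x y z) (SY x y z) (tau z)"
      by (simp add: SX_def SY_def True z tau0 mult.commute)
    finally show ?thesis .
  qed
qed

end


lemma DET_transform:
  fixes a b c d e f p r s t o1 o2 :: "'a::idom"
  shows "DET (a*p^2 + b*r^2 + d*p*r) (a*s^2 + b*t^2 + d*s*t) (a*o1^2 + b*o2^2 + c + d*o1*o2 + e*o1 + f*o2) (2*a*p*s + 2*b*r*t + d*(p*t + s*r)) (2*a*p*o1 + 2*b*r*o2 + d*(p*o2 + r*o1) + e*p + f*r) (2*a*s*o1 + 2*b*t*o2 + d*(s*o2 + t*o1) + e*s + f*t) = (p*t - s*r)^2 * DET a b c d e f"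
proof -
  have "(2*(a*p^2 + b*r^2 + d*p*r)) * ((2*(a*s^2 + b*t^2 + d*s*t)) * (2*(a*o1^2 + b*o2^2 + c + d*o1*o2 + e*o1 + f*o2)) - (2*a*s*o1 + 2*b*t*o2 + d*(s*o2 + t*o1) + e*s + f*t) * (2*a*s*o1 + 2*b*t*o2 + d*(s*o2 + t*o1) + e*s + f*t)) - (2*a*p*s + 2*b*r*t + d*(p*t + s*r)) * ((2*a*p*s + 2*b*r*t + d*(p*t + s*r)) * (2*(a*o1^2 + b*o2^2 + c + d*o1*o2 + e*o1 + f*o2)) - (2*a*s*o1 + 2*b*t*o2 + d*(s*o2 + t*o1) + e*s + f*t) * (2*a*p*o1 + 2*b*r*o2 + d*(p*o2 + r*o1) + e*p + f*r)) + (2*a*p*o1 + 2*b*r*o2 + d*(p*o2 + r*o1) + e*p + f*r) * ((2*a*p*s + 2*b*r*t + d*(p*t + s*r)) * (2*a*s*o1 + 2*b*t*o2 + d*(s*o2 + t*o1) + e*s + f*t) - (2*(a*s^2 + b*t^2 + d*s*t)) * (2*a*p*o1 + 2*b*r*o2 + d*(p*o2 + r*o1) + e*p + f*r))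
 = (p*t - s*r)^2 * ((2*a) * ((2*b) * (2*c) - f * f) - d * (d * (2*c) - f * e) + e * (d * f - (2*b) * e))"
    by Groebner_Basis.algebra
  thus ?thesis by (simp add: DET_def)
qed

lemma qf_transform:
  fixes a b c d e f p r s t o1 o2 u v w :: "'a::idom"
  shows "qf a b c d e f (p*u + s*v + o1*w) (r*u + t*v + o2*w) w = qf (a*p^2 + b*r^2 + d*p*r) (a*s^2 + b*t^2 + d*s*t) (a*o1^2 + b*o2^2 + c + d*o1*o2 + e*o1 + f*o2) (2*a*p*s + 2*b*r*t + d*(p*t + s*r)) (2*a*p*o1 + 2*b*r*o2 + d*(p*o2 + r*o1) + e*p + f*r) (2*a*s*o1 + 2*b*t*o2 + d*(s*o2 + t*o1) + e*s + f*t) u v w"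
  unfolding qf_def by Groebner_Basis.algebra

context pcoll
begin

lemma tau_inv: "tau (inv_into UNIV tau y) = y"
  using tau_bij by (simp add: bij_is_surj surj_f_inv_f)

lemma tau_zero_iff: "tau x = 0 \<longleftrightarrow> x = 0"
  using tau_nz tau0 by auto

lemma tau_qf: "tau (qf a b c d e f x y z) = qf (tau a) (tau b) (tau c) (tau d) (tau e) (tau f) (tau x) (tau y) (tau z)"
  by (simp add: qf_def tau_add tau_mult tau_pow)

lemma tau_DET: "tau (DET a b c d e f) = DET (tau a) (tau b) (tau c) (tau d) (tau e) (tau f)"
  by (simp add: DET_def tau_add tau_diff tau_mult tau_num)

lemma pullback:
  assumes det: "DET a b c d e f \<noteq> 0"
  shows "\<exists>a2 b2 c2 d2 e2 f2. DET a2 b2 c2 d2 e2 f2 \<noteq> 0 \<and>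
           {P \<in> points. \<sigma> P \<in> conicset a b c d e f} = conicset a2 b2 c2 d2 e2 f2"
proof -
  let ?p = pp and ?r = rr and ?s = ss and ?t = tt
  define a' where "a' = a*?p^2 + b*?r^2 + d*?p*?r"
  define b' where "b' = a*?s^2 + b*?t^2 + d*?s*?t"
  define c' where "c' = a*o1^2 + b*o2^2 + c + d*o1*o2 + e*o1 + f*o2"
  define d' where "d' = 2*a*?p*?s + 2*b*?r*?t + d*(?p*?t + ?s*?r)"
  define e' where "e' = 2*a*?p*o1 + 2*b*?r*o2 + d*(?p*o2 + ?r*o1) + e*?p + f*?r"
  define f' where "f' = 2*a*?s*o1 + 2*b*?t*o2 + d*(?s*o2 + ?t*o1) + e*?s + f*?t"
  have D': "DET a' b' c' d' e' f' = \<Delta>^2 * DET a b c d e f"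
    unfolding a'_def b'_def c'_def d'_def e'_def f'_def \<Delta>_def by (rule DET_transform)
  have Q: "qf a b c d e f (?p*u + ?s*v + o1*w) (?r*u + ?t*v + o2*w) w = qf a' b' c' d' e' f' u v w" for u v w
    unfolding a'_def b'_def c'_def d'_def e'_def f'_def by (rule qf_transform)
  define a2 where "a2 = inv_into UNIV tau a'"
  define b2 where "b2 = inv_into UNIV tau b'"
  define c2 where "c2 = inv_into UNIV tau c'"
  define d2 where "d2 = inv_into UNIV tau d'"
  define e2 where "e2 = inv_into UNIV tau e'"
  define f2 where "f2 = inv_into UNIV tau f'"
  have ti: "tau a2 = a'" "tau b2 = b'" "tau c2 = c'" "tau d2 = d'" "tau e2 = e'" "tau f2 = f'"
    by (simp_all add: a2_def b2_def c2_def d2_def e2_def f2_def tau_inv)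
  have "tau (DET a2 b2 c2 d2 e2 f2) = \<Delta>^2 * DET a b c d e f" using D' by (simp add: tau_DET ti)
  hence det2: "DET a2 b2 c2 d2 e2 f2 \<noteq> 0" using det \<Delta>_ne0 tau0 by auto
  have "{P \<in> points. \<sigma> P \<in> conicset a b c d e f} = conicset a2 b2 c2 d2 e2 f2"
  proof (intro equalityI subsetI)
    fix P assume P: "P \<in> {P \<in> points. \<sigma> P \<in> conicset a b c d e f}"
    then obtain x y z where v: "P = pt x y z" "(x,y,z) \<noteq> (0,0,0)" using points_vec by blast
    have nz: "(SX x y z, SY x y z, tau z) \<noteq> (0,0,0)"
    proof
      assume h: "(SX x y z, SY x y z, tau z) = (0,0,0)"
      hence SXz: "SX x y z = 0" and SYz: "SY x y z = 0" and "tau z = 0" by simp_all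
      hence z: "z = 0" using tau_zero_iff by simp
      have "\<Delta> * tau x = tt * SX x y z - ss * SY x y z" by (simp add: SX_def SY_def z tau0 \<Delta>_def algebra_simps)
      hence "\<Delta> * tau x = 0" using SXz SYz by simp
      hence "x = 0" using \<Delta>_ne0 tau_zero_iff by simp
      moreover have "\<Delta> * tau y = pp * SY x y z - rr * SX x y z" by (simp add: SX_def SY_def z tau0 \<Delta>_def algebra_simps)
      hence "\<Delta> * tau y = 0" using SXz SYz by simp
      hence "y = 0" using \<Delta>_ne0 tau_zero_iff by simp
      ultimately show False using v z by simp
    qed
    have "\<sigma> P \<in> conicset a b c d e f" using P by simp
    hence "qf a b c d e f (SX x y z) (SY x y z) (tau z) = 0" using v sigma_pt conicset_pt[OF nz] by simp
    hence "qf a' b' c' d' e' f' (tau x) (tau y) (tau z) = 0" using Q by (simp add: SX_def SY_def)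
    hence "tau (qf a2 b2 c2 d2 e2 f2 x y z) = 0" by (simp add: tau_qf ti)
    hence "qf a2 b2 c2 d2 e2 f2 x y z = 0" using tau_zero_iff by simp
    thus "P \<in> conicset a2 b2 c2 d2 e2 f2" using v conicset_pt[OF v(2)] by simp
  next
    fix P assume P: "P \<in> conicset a2 b2 c2 d2 e2 f2"
    hence Pp: "P \<in> points" by (simp add: conicset_def)
    then obtain x y z where v: "P = pt x y z" "(x,y,z) \<noteq> (0,0,0)" using points_vec by blast
    have nz: "(SX x y z, SY x y z, tau z) \<noteq> (0,0,0)"
    proof
      assume h: "(SX x y z, SY x y z, tau z) = (0,0,0)"
      hence SXz: "SX x y z = 0" and SYz: "SY x y z = 0" and "tau z = 0" by simp_all
      hence z: "z = 0" using tau_zero_iff by simp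
      have "\<Delta> * tau x = tt * SX x y z - ss * SY x y z" by (simp add: SX_def SY_def z tau0 \<Delta>_def algebra_simps)
      hence "\<Delta> * tau x = 0" using SXz SYz by simp
      hence "x = 0" using \<Delta>_ne0 tau_zero_iff by simp
      moreover have "\<Delta> * tau y = pp * SY x y z - rr * SX x y z" by (simp add: SX_def SY_def z tau0 \<Delta>_def algebra_simps)
      hence "\<Delta> * tau y = 0" using SXz SYz by simp
      hence "y = 0" using \<Delta>_ne0 tau_zero_iff by simp
      ultimately show False using v z by simp
    qed
    have "qf a2 b2 c2 d2 e2 f2 x y z = 0" using P v conicset_pt[OF v(2)] by simp
    hence "qf a' b' c' d' e' f' (tau x) (tau y) (tau z) = 0" using tau_qf[of a2 b2 c2 d2 e2 f2 x y z] tau0 ti by simp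
    hence "qf a b c d e f (SX x y z) (SY x y z) (tau z) = 0" using Q by (simp add: SX_def SY_def)
    hence "\<sigma> P \<in> conicset a b c d e f" using v sigma_pt conicset_pt[OF nz] by simp
    thus "P \<in> {P \<in> points. \<sigma> P \<in> conicset a b c d e f}" using Pp by simp
  qed
  thus ?thesis using det2 by blast
qed

end

theorem theorem2p9:
  fixes q :: nat and U :: "('a::{field, finite}) ppoint set" and Q :: "'a ppoint"
  assumes "card (UNIV :: 'a set) = q ^ 2"
    and "odd q"
    and "conic_BM_unital q U"
    and "Q \<in> points"
    and "Q \<notin> U"
    and "Q \<notin> line_inf"
  shows "is_arc (pedal U Q)"
proof -
  interpret fq q "TYPE('a)" using assms(1,2) by unfold_locales
  obtain \<sigma> \<alpha> \<beta> where sig: "collineation \<sigma>" "\<sigma> ` line_inf = line_inf" and BM: "BM_params_ok q \<alpha> \<beta>"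
    and U: "U = \<sigma> ` U_ab q \<alpha> \<beta>"
    using assms(3) by (auto simp: conic_BM_unital_def orth_BM_unital_def)
  obtain C where C: "nondeg_conic C" "C \<subseteq> U" using assms(3) by (auto simp: conic_BM_unital_def)
  obtain a b c d e f where abc: "DET a b c d e f \<noteq> 0" "C = conicset a b c d e f"
    using C(1) unfolding nondeg_conic_iff DET_def by blast
  interpret pcoll \<sigma> using sig by unfold_locales
  obtain a2 b2 c2 d2 e2 f2 where K: "DET a2 b2 c2 d2 e2 f2 \<noteq> 0"
    "{P \<in> points. \<sigma> P \<in> conicset a b c d e f} = conicset a2 b2 c2 d2 e2 f2"
    using pullback[OF abc(1)] by blast
  have Ksub: "conicset a2 b2 c2 d2 e2 f2 \<subseteq> U_ab q \<alpha> \<beta>"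
  proof
    fix P assume "P \<in> conicset a2 b2 c2 d2 e2 f2"
    hence P: "P \<in> points" "\<sigma> P \<in> C" using K(2) abc(2) by blast+
    then obtain R where R: "R \<in> U_ab q \<alpha> \<beta>" "\<sigma> R = \<sigma> P" using C(2) U by auto
    have "R \<in> points" using R U_ab_points by auto
    hence "R = P" using R P inj\<sigma> by (auto dest: inj_onD)
    thus "P \<in> U_ab q \<alpha> \<beta>" using R by simp
  qed
  interpret cbm q "TYPE('a)" \<alpha> \<beta> a2 b2 c2 d2 e2 f2
    using BM K(1) Ksub by unfold_locales
  have bF: "\<beta>^q = \<beta>" by (rule beta_F)
  have a0: "\<alpha> \<noteq> 0"
  proof
    assume "\<alpha> = 0"
    hence "(\<beta> ^ q - \<beta>) ^ 2 + 4 * \<alpha> ^ (q + 1) = 0 ^ 2" using bF by simp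
    moreover have "(0::'a) \<in> subF q" by (rule subF_0)
    ultimately show False using BM by (auto simp: BM_params_ok_def nonsquare_in_subF_def)
  qed
  have bijs: "bij_betw \<sigma> points points" using sig by (simp add: collineation_def)
  obtain Q' where Q': "Q' \<in> points" "\<sigma> Q' = Q" using assms(4) bijs by (metis bij_betw_imp_surj_on imageE)
  have "Q' \<notin> line_inf" using Q' assms(6) \<sigma>_inf_iff by auto
  then obtain a0 b0 where Qa: "Q' = Aff a0 b0" using Q'(1) not_linf_Aff by metis
  let ?G = "{Aff x ((2*\<alpha>)*x^2 + (-(2*\<alpha>*a0))*x + b0) | x. True}"
  have G: "{Aff x (2*\<alpha>*x^2 - 2*\<alpha>*a0*x + b0) | x. True} = ?G" by (simp add: algebra_simps)
  have arcG: "is_arc ?G" by (rule parabola_arc) (use a0 two_ne0 in simp)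
  have Gp: "?G \<subseteq> points" by auto
  have "pedal U Q \<subseteq> \<sigma> ` pedal (U_ab q \<alpha> \<beta>) Q'"
    using pedal_transport[OF sig(1) U_ab_points Q'(1)] U Q'(2) by simp
  also have "\<dots> \<subseteq> \<sigma> ` ?G" using pedal_sub[OF bF a0, of a0 b0] Qa G by (simp add: image_mono)
  finally have sub: "pedal U Q \<subseteq> \<sigma> ` ?G" .
  have "is_arc (\<sigma> ` ?G)" by (rule arc_transport[OF sig(1) Gp arcG])
  thus ?thesis using sub by (rule arc_subset)
qed

end
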